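(* Let $f:\Sigma\to\mathbb{L}^3$ be a minface and let $p$ be a regular point of $f$ which is not a flat point. Then near $p$ there are local coordinates $(u,v)$, smooth functions $g_1(u)$, $g_2(v)$ with $g_1'\neq0$, $g_2'\neq0$, and signs $\varepsilon_\varphi,\varepsilon_\psi\in\{1,-1\}$ such that $f(u,v)=\frac12\int_{u_0}^u(-1-g_1^2,\,1-g_1^2,\,2g_1)\frac{-\varepsilon_\varphi}{2g_1'}du+\frac12\int_{v_0}^v(1+g_2^2,\,1-g_2^2,\,-2g_2)\frac{-\varepsilon_\psi}{2g_2'}dv+f(u_0,v_0)$, where $u$ and $v$ are pseudo-arclength parameters of the null curves $\varphi$ and $\psi$ given by the two integrals (without the factor $\frac12$), and $\varepsilon_\varphi$, $\varepsilon_\psi$ are their orientations. The Gaussian curvature $K$ is positive (resp. negative) if and only if $\varphi$ and $\psi$ have the same orientation (resp. different orientations). In this case, the Lorentz isothermal coordinates $(x,y)=\big(\frac{u-v}{2},\frac{u+v}{2}\big)$ form a conformal asymptotic coordinate system (resp. a conformal curvature line coordinate system).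
   Context: $\mathbb{L}^3$ is $\mathbb{R}^3$ with the Lorentzian metric $\langle\,,\,\rangle=-(dx^0)^2+(dx^1)^2+(dx^2)^2$. A smooth map $f:\Sigma\to\mathbb{L}^3$ from a connected oriented 2-manifold is a minface if around each point there are local coordinates $(u,v)$ on a domain $U$, smooth functions $g_1(u)$, $g_2(v)$ and nowhere-vanishing smooth functions $\hat\omega_1(u)$, $\hat\omega_2(v)$, with $g_1g_2\neq1$ on an open dense subset of $U$, such that $f(u,v)=\frac12\int(-1-g_1^2,1-g_1^2,2g_1)\hat\omega_1du+\frac12\int(1+g_2^2,1-g_2^2,-2g_2)\hat\omega_2dv+\mathrm{const}$. Regular points are those where $f$ is an immersion; there $f$ is a timelike (Lorentzian induced metric) immersion with zero mean curvature. The Gaussian curvature is $K=\det S$ for the shape operator $S$ with respect to a spacelike unit normal; a flat point is a regular point with $K=0$ (equivalently an umbilic or quasi-umbilic point). A null curve is a regular curve $\gamma$ with $\langle\gamma',\gamma'\rangle=0$; it is non-degenerate if $\gamma'\times\gamma''\neq0$; for such a curve a parameter $t$ is a pseudo-arclength parameter if $\langle\gamma'',\gamma''\rangle\equiv1$, and its orientation is the sign of $\det(\gamma',\gamma'',\gamma''')$. Coordinates $(x,y)$ are Lorentz isothermal (conformal) if the first fundamental form is $E(-dx^2+dy^2)$; such a system is asymptotic if the second fundamental form $\mathrm{II}$ satisfies $\mathrm{II}(\partial_x,\partial_x)=\mathrm{II}(\partial_y,\partial_y)=0$, and a curvature line system if $\mathrm{II}(\partial_x,\partial_y)=0$. *)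

theory Defs
  imports "HOL-Analysis.Analysis"
begin

section \<open>Lorentz--Minkowski space L^3 = real^3, coordinates x^0,x^1,x^2 = components 1,2,3\<close>

definition lor :: "real^3 \<Rightarrow> real^3 \<Rightarrow> real" where
  "lor a b = - (a$1 * b$1) + a$2 * b$2 + a$3 * b$3"

text \<open>Lorentzian cross product, characterised by lor (lcross a b) c = det(a,b,c).\<close>
definition lcross :: "real^3 \<Rightarrow> real^3 \<Rightarrow> real^3" where
  "lcross a b = vector [ -(a$2 * b$3 - a$3 * b$2),
                         a$3 * b$1 - a$1 * b$3,
                         a$1 * b$2 - a$2 * b$1 ]"

definition det3 :: "real^3 \<Rightarrow> real^3 \<Rightarrow> real^3 \<Rightarrow> real" where
  "det3 a b c = det (vector [a, b, c] :: real^3^3)"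

definition vd :: "(real \<Rightarrow> 'a::real_normed_vector) \<Rightarrow> real \<Rightarrow> 'a" where
  "vd g = (\<lambda>t. vector_derivative g (at t))"

text \<open>C-infinity on a set (intended open): all iterated derivatives exist\<close>
definition smooth1_on :: "(real \<Rightarrow> 'a::real_normed_vector) \<Rightarrow> real set \<Rightarrow> bool" where
  "smooth1_on g S \<longleftrightarrow> (\<forall>n. \<forall>t\<in>S. ((vd ^^ n) g) differentiable (at t))"

definition pd1 :: "(real \<times> real \<Rightarrow> 'a::real_normed_vector) \<Rightarrow> real \<times> real \<Rightarrow> 'a" where
  "pd1 F = (\<lambda>(u, v). vector_derivative (\<lambda>s. F (s, v)) (at u))"

definition pd2 :: "(real \<times> real \<Rightarrow> 'a::real_normed_vector) \<Rightarrow> real \<times> real \<Rightarrow> 'a" where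
  "pd2 F = (\<lambda>(u, v). vector_derivative (\<lambda>s. F (u, s)) (at v))"

fun pds :: "bool list \<Rightarrow> (real \<times> real \<Rightarrow> 'a::real_normed_vector) \<Rightarrow> real \<times> real \<Rightarrow> 'a" where
  "pds [] F = F"
| "pds (b # bs) F = (if b then pd1 else pd2) (pds bs F)"

definition smooth2_on :: "(real \<times> real \<Rightarrow> 'a::real_normed_vector) \<Rightarrow> (real \<times> real) set \<Rightarrow> bool" where
  "smooth2_on F S \<longleftrightarrow> (\<forall>bs. \<forall>q\<in>S. (pds bs F) differentiable (at q))"

definition regular_pt :: "(real \<times> real \<Rightarrow> real^3) \<Rightarrow> real \<times> real \<Rightarrow> bool" where
  "regular_pt F q \<longleftrightarrow> lcross (pd1 F q) (pd2 F q) \<noteq> 0"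

text \<open>spacelike unit normal (at regular points of a timelike immersion)\<close>
definition unit_normal :: "(real \<times> real \<Rightarrow> real^3) \<Rightarrow> real \<times> real \<Rightarrow> real^3" where
  "unit_normal F q = (let N = lcross (pd1 F q) (pd2 F q) in (1 / sqrt (lor N N)) *\<^sub>R N)"

definition II11 where "II11 F q = lor (pd1 (pd1 F) q) (unit_normal F q)"
definition II12 where "II12 F q = lor (pd2 (pd1 F) q) (unit_normal F q)"
definition II22 where "II22 F q = lor (pd2 (pd2 F) q) (unit_normal F q)"

text \<open>Gaussian curvature K = det S with S = I^{-1} II the shape operator, i.e.
  K = det II / det I\<close>
definition gauss_curv :: "(real \<times> real \<Rightarrow> real^3) \<Rightarrow> real \<times> real \<Rightarrow> real" where
  "gauss_curv F q =
     (II11 F q * II22 F q - (II12 F q)^2) /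
     (lor (pd1 F q) (pd1 F q) * lor (pd2 F q) (pd2 F q) - (lor (pd1 F q) (pd2 F q))^2)"

definition flat_pt :: "(real \<times> real \<Rightarrow> real^3) \<Rightarrow> real \<times> real \<Rightarrow> bool" where
  "flat_pt F q \<longleftrightarrow> regular_pt F q \<and> gauss_curv F q = 0"

definition lorentz_isothermal :: "(real \<times> real \<Rightarrow> real^3) \<Rightarrow> (real \<times> real) set \<Rightarrow> bool" where
  "lorentz_isothermal G D \<longleftrightarrow> (\<exists>E. \<forall>q\<in>D.
      lor (pd1 G q) (pd1 G q) = - E q \<and> lor (pd2 G q) (pd2 G q) = E q \<and>
      lor (pd1 G q) (pd2 G q) = 0)"

definition conformal_asymptotic :: "(real \<times> real \<Rightarrow> real^3) \<Rightarrow> (real \<times> real) set \<Rightarrow> bool" where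
  "conformal_asymptotic G D \<longleftrightarrow> lorentz_isothermal G D \<and>
      (\<forall>q\<in>D. II11 G q = 0 \<and> II22 G q = 0)"

definition conformal_curvature_line :: "(real \<times> real \<Rightarrow> real^3) \<Rightarrow> (real \<times> real) set \<Rightarrow> bool" where
  "conformal_curvature_line G D \<longleftrightarrow> lorentz_isothermal G D \<and> (\<forall>q\<in>D. II12 G q = 0)"

definition null_curve_on :: "(real \<Rightarrow> real^3) \<Rightarrow> real set \<Rightarrow> bool" where
  "null_curve_on \<gamma> I \<longleftrightarrow> smooth1_on \<gamma> I \<and> (\<forall>t\<in>I. vd \<gamma> t \<noteq> 0 \<and> lor (vd \<gamma> t) (vd \<gamma> t) = 0)"

definition nondegenerate_on :: "(real \<Rightarrow> real^3) \<Rightarrow> real set \<Rightarrow> bool" where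
  "nondegenerate_on \<gamma> I \<longleftrightarrow> (\<forall>t\<in>I. lcross (vd \<gamma> t) (vd (vd \<gamma>) t) \<noteq> 0)"

definition pseudo_arclength_on :: "(real \<Rightarrow> real^3) \<Rightarrow> real set \<Rightarrow> bool" where
  "pseudo_arclength_on \<gamma> I \<longleftrightarrow> (\<forall>t\<in>I. lor (vd (vd \<gamma>) t) (vd (vd \<gamma>) t) = 1)"

definition null_orientation :: "(real \<Rightarrow> real^3) \<Rightarrow> real \<Rightarrow> real" where
  "null_orientation \<gamma> t = sgn (det3 (vd \<gamma> t) (vd (vd \<gamma>) t) (vd (vd (vd \<gamma>)) t))"

text \<open>f restricted to the open coordinate domain U is given by the minface
  representation with data g1, g2, w1, w2; A and B are the two indefinite integrals.\<close>
definition minface_chart ::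
  "(real \<times> real \<Rightarrow> real^3) \<Rightarrow> (real \<times> real) set \<Rightarrow> (real \<Rightarrow> real) \<Rightarrow> (real \<Rightarrow> real)
   \<Rightarrow> (real \<Rightarrow> real) \<Rightarrow> (real \<Rightarrow> real) \<Rightarrow> bool" where
  "minface_chart f U g1 g2 w1 w2 \<longleftrightarrow>
     open U \<and>
     smooth1_on g1 (fst ` U) \<and> smooth1_on w1 (fst ` U) \<and> (\<forall>u\<in>fst ` U. w1 u \<noteq> 0) \<and>
     smooth1_on g2 (snd ` U) \<and> smooth1_on w2 (snd ` U) \<and> (\<forall>v\<in>snd ` U. w2 v \<noteq> 0) \<and>
     (\<exists>Od. open Od \<and> Od \<subseteq> U \<and> U \<subseteq> closure Od \<and> (\<forall>(u, v)\<in>Od. g1 u * g2 v \<noteq> 1)) \<and>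
     (\<exists>A B c.
        (\<forall>u\<in>fst ` U. (A has_vector_derivative
            ((1/2) * w1 u) *\<^sub>R vector [-1 - (g1 u)^2, 1 - (g1 u)^2, 2 * g1 u]) (at u)) \<and>
        (\<forall>v\<in>snd ` U. (B has_vector_derivative
            ((1/2) * w2 v) *\<^sub>R vector [1 + (g2 v)^2, 1 - (g2 v)^2, -2 * g2 v]) (at v)) \<and>
        (\<forall>(u, v)\<in>U. f (u, v) = A u + B v + c))"

end

theory Submission
  imports Defs
begin

primrec Ck :: "nat \<Rightarrow> (real \<Rightarrow> 'a::real_normed_vector) \<Rightarrow> real set \<Rightarrow> bool" where
  "Ck 0 g S = (\<forall>t\<in>S. g differentiable (at t))"
| "Ck (Suc k) g S = ((\<forall>t\<in>S. g differentiable (at t)) \<and> Ck k (vd g) S)"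

lemma Ck_iff: "Ck k g S \<longleftrightarrow> (\<forall>n\<le>k. \<forall>t\<in>S. ((vd ^^ n) g) differentiable (at t))"
proof (induction k arbitrary: g)
  case 0 then show ?case by simp
next
  case (Suc k)
  have "(\<forall>n\<le>Suc k. \<forall>t\<in>S. ((vd ^^ n) g) differentiable (at t)) \<longleftrightarrow>
        (\<forall>t\<in>S. g differentiable (at t)) \<and> (\<forall>n\<le>k. \<forall>t\<in>S. ((vd ^^ n) (vd g)) differentiable (at t))"
    (is "?L \<longleftrightarrow> ?R")
  proof
    assume L: ?L
    show ?R
    proof
      show "\<forall>t\<in>S. g differentiable (at t)" using L[rule_format, of 0] by simp
      show "\<forall>n\<le>k. \<forall>t\<in>S. (vd ^^ n) (vd g) differentiable at t"
        using L by (metis Suc_le_mono funpow_Suc_right o_apply)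
    qed
  next
    assume R: ?R
    show ?L
    proof (intro allI impI ballI)
      fix n t assume n: "n \<le> Suc k" and t: "t \<in> S"
      show "(vd ^^ n) g differentiable at t"
      proof (cases n)
        case 0 then show ?thesis using R t by simp
      next
        case (Suc m) then show ?thesis using R t n by (simp add: funpow_Suc_right del: funpow.simps)
      qed
    qed
  qed
  then show ?case using Suc.IH[of "vd g"] by simp
qed

lemma smooth1_iff: "smooth1_on g S \<longleftrightarrow> (\<forall>k. Ck k g S)"
  unfolding smooth1_on_def Ck_iff by blast

lemma Ck_Suc_D: "Ck (Suc k) g S \<Longrightarrow> Ck k g S"
  by (induction k arbitrary: g) auto

lemma Ck_le: "Ck k g S \<Longrightarrow> m \<le> k \<Longrightarrow> Ck m g S"
  unfolding Ck_iff by auto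

lemma Ck_diff: "Ck k g S \<Longrightarrow> t \<in> S \<Longrightarrow> g differentiable (at t)"
  by (cases k) auto

lemma vd_cong:
  assumes "open S" "\<And>t. t \<in> S \<Longrightarrow> f t = g t" "t \<in> S"
  shows "vd f t = vd g t"
  unfolding vd_def
  by (rule vector_derivative_cong_eq) (use assms in \<open>auto intro: eventually_nhds_in_open[THEN eventually_mono]\<close>)

lemma differentiable_open_cong:
  assumes "open S" "\<And>t. t \<in> S \<Longrightarrow> f t = g t" "t \<in> S" "f differentiable (at t)"
  shows "g differentiable (at t)"
  using assms has_derivative_transform_within_open[of f _ t UNIV S g] unfolding differentiable_def by blast

lemma Ck_cong:
  assumes "open S" "\<And>t. t \<in> S \<Longrightarrow> f t = g t"
  shows "Ck k f S = Ck k g S"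
  using assms
proof (induction k arbitrary: f g)
  case 0
  have "(f differentiable at t) = (g differentiable at t)" if "t \<in> S" for t
    using differentiable_open_cong[of S f g t] differentiable_open_cong[of S g f t] 0 that by metis
  then show ?case by simp
next
  case (Suc k)
  have "Ck k (vd f) S = Ck k (vd g) S"
    by (rule Suc.IH) (use Suc.prems in \<open>auto intro: vd_cong[of S f g]\<close>)
  moreover have "(f differentiable at t) = (g differentiable at t)" if "t \<in> S" for t
    using differentiable_open_cong[of S f g t] differentiable_open_cong[of S g f t] Suc.prems that by metis
  ultimately show ?case by simp
qed

lemma vd_at: "(f has_vector_derivative f') (at t) \<Longrightarrow> vd f t = f'"
  unfolding vd_def by (rule vector_derivative_at)

lemma vd_has: "f differentiable (at t) \<Longrightarrow> (f has_vector_derivative vd f t) (at t)"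
  unfolding vd_def using vector_derivative_works by blast

lemma Ck_vd: "Ck (Suc k) f S \<Longrightarrow> Ck k (vd f) S" by simp

lemma Ck_const: "Ck k (\<lambda>t. c) S"
proof (induction k arbitrary: c)
  case 0 then show ?case by simp
next
  case (Suc k)
  have "vd (\<lambda>t. c) = (\<lambda>t. 0)" by (rule ext) (simp add: vd_at)
  then show ?case using Suc by simp
qed

lemma Ck_id: "Ck k (\<lambda>t::real. t) S"
proof (cases k)
  case (Suc m)
  have "vd (\<lambda>t::real. t) = (\<lambda>t. 1)" by (rule ext) (simp add: vd_at)
  then show ?thesis using Suc Ck_const by simp
qed simp

lemma Ck_add:
  assumes "open S" "Ck k f S" "Ck k g S"
  shows "Ck k (\<lambda>t. f t + g t) S"
  using assms(2,3)
proof (induction k arbitrary: f g)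
  case 0 then show ?case by auto
next
  case (Suc k)
  have "Ck k (vd (\<lambda>t. f t + g t)) S = Ck k (\<lambda>t. vd f t + vd g t) S"
  proof (rule Ck_cong[OF assms(1)])
    fix t assume t: "t \<in> S"
    have "f differentiable at t" "g differentiable at t" using Suc.prems t by auto
    then show "vd (\<lambda>t. f t + g t) t = vd f t + vd g t"
      by (intro vd_at has_vector_derivative_add vd_has)
  qed
  then show ?case using Suc by auto
qed

lemma Ck_scaleR:
  assumes "open S" "Ck k a S" "Ck k F S"
  shows "Ck k (\<lambda>t. a t *\<^sub>R F t) S"
  using assms(2,3)
proof (induction k arbitrary: a F)
  case 0 then show ?case by auto
next
  case (Suc k)
  have "Ck k (vd (\<lambda>t. a t *\<^sub>R F t)) S = Ck k (\<lambda>t. a t *\<^sub>R vd F t + vd a t *\<^sub>R F t) S"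
  proof (rule Ck_cong[OF assms(1)])
    fix t assume t: "t \<in> S"
    have "a differentiable at t" "F differentiable at t" using Suc.prems t by auto
    then show "vd (\<lambda>t. a t *\<^sub>R F t) t = a t *\<^sub>R vd F t + vd a t *\<^sub>R F t"
      by (intro vd_at has_vector_derivative_scaleR vd_has[THEN iffD2[OF has_real_derivative_iff_has_vector_derivative]] vd_has)
  qed
  moreover have "Ck k (\<lambda>t. a t *\<^sub>R vd F t + vd a t *\<^sub>R F t) S"
    using Suc.prems by (intro Ck_add[OF assms(1)] Suc.IH[OF Ck_Suc_D[of k a] Ck_vd] Suc.IH[OF Ck_vd Ck_Suc_D[of k F]])
  ultimately show ?case using Suc by auto
qed

lemma Ck_mult:
  fixes a b :: "real \<Rightarrow> real"
  assumes "open S" "Ck k a S" "Ck k b S"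
  shows "Ck k (\<lambda>t. a t * b t) S"
  using Ck_scaleR[OF assms] by simp

lemma Ck_cmult:
  assumes "open S" "Ck k F S"
  shows "Ck k (\<lambda>t. c *\<^sub>R F t) S"
  using Ck_scaleR[OF assms(1) Ck_const assms(2)] by simp

lemma Ck_diff_fun:
  assumes "open S" "Ck k f S" "Ck k g S"
  shows "Ck k (\<lambda>t. f t - g t) S"
  using Ck_add[OF assms(1,2) Ck_cmult[OF assms(1,3), of "-1"]] by simp


lemma Ck_compose:
  fixes g :: "real \<Rightarrow> real"
  assumes "open S" "open T" "g ` S \<subseteq> T" "Ck k f T" "Ck k g S"
  shows "Ck k (\<lambda>t. f (g t)) S"
  using assms(4,5)
proof (induction k arbitrary: f)
  case 0
  show ?case
  proof (simp, intro ballI)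
    fix t assume t: "t \<in> S"
    have "g differentiable at t" "f differentiable at (g t)" using 0 t assms(3) by (auto simp: image_subset_iff)
    then show "(\<lambda>t. f (g t)) differentiable at t"
      using vector_diff_chain_at[OF vd_has vd_has] unfolding o_def differentiable_def has_vector_derivative_def by blast
  qed
next
  case (Suc k)
  have "Ck k (vd (\<lambda>t. f (g t))) S = Ck k (\<lambda>t. vd g t *\<^sub>R vd f (g t)) S"
  proof (rule Ck_cong[OF assms(1)])
    fix t assume t: "t \<in> S"
    have "g differentiable at t" "f differentiable at (g t)" using Suc.prems t assms(3) by (auto simp: image_subset_iff)
    then show "vd (\<lambda>t. f (g t)) t = vd g t *\<^sub>R vd f (g t)"
      using vector_diff_chain_at[OF vd_has vd_has] unfolding o_def by (intro vd_at) blast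
  qed
  moreover have "Ck k (\<lambda>t. vd g t *\<^sub>R vd f (g t)) S"
    using Suc.prems by (intro Ck_scaleR[OF assms(1)] Suc.IH[OF Ck_vd Ck_Suc_D[of k g]] Ck_vd)
  moreover have "Ck 0 (\<lambda>t. f (g t)) S"
  proof (simp, intro ballI)
    fix t assume t: "t \<in> S"
    have "g differentiable at t" "f differentiable at (g t)" using Suc.prems t assms(3) by (auto simp: image_subset_iff)
    then show "(\<lambda>t. f (g t)) differentiable at t"
      using vector_diff_chain_at[OF vd_has vd_has] unfolding o_def differentiable_def has_vector_derivative_def by blast
  qed
  ultimately show ?case by simp
qed


lemma real_vd_has: "(f::real\<Rightarrow>real) differentiable (at t) \<Longrightarrow> (f has_real_derivative vd f t) (at t)"
  using vd_has has_real_derivative_iff_has_vector_derivative by blast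

lemma real_diff_of_deriv: "((f::real\<Rightarrow>real) has_real_derivative D) (at t) \<Longrightarrow> f differentiable (at t)"
  using has_real_derivative_iff_has_vector_derivative differentiable_def has_vector_derivative_def by blast

lemma inverse_has_vd:
  fixes f :: "real \<Rightarrow> real"
  assumes "f differentiable (at t)" "f t \<noteq> 0"
  shows "((\<lambda>t. inverse (f t)) has_real_derivative - (vd f t * (inverse (f t) * inverse (f t)))) (at t)"
  using DERIV_inverse_fun[OF real_vd_has[OF assms(1)] assms(2)] by (simp add: algebra_simps)

lemma Ck_inverse:
  fixes f :: "real \<Rightarrow> real"
  assumes "open S" "Ck k f S" "\<And>t. t \<in> S \<Longrightarrow> f t \<noteq> 0"
  shows "Ck k (\<lambda>t. inverse (f t)) S"
  using assms(2)
proof (induction k)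
  case 0
  then show ?case using assms(3) real_diff_of_deriv[OF inverse_has_vd] by (metis Ck.simps(1))
next
  case (Suc k)
  have "Ck k (vd (\<lambda>t. inverse (f t))) S = Ck k (\<lambda>t. - (vd f t * (inverse (f t) * inverse (f t)))) S"
  proof (rule Ck_cong[OF assms(1)])
    fix t assume t: "t \<in> S"
    have d: "f differentiable at t" using Suc.prems t by auto
    show "vd (\<lambda>t. inverse (f t)) t = - (vd f t * (inverse (f t) * inverse (f t)))"
      using inverse_has_vd[OF d assms(3)[OF t]] has_real_derivative_iff_has_vector_derivative vd_at by blast
  qed
  moreover have "Ck k (\<lambda>t. - (vd f t * (inverse (f t) * inverse (f t)))) S"
    using Ck_cmult[OF assms(1) Ck_mult[OF assms(1) Ck_vd[OF Suc.prems] Ck_mult[OF assms(1) Suc.IH[OF Ck_Suc_D[OF Suc.prems]] Suc.IH[OF Ck_Suc_D[OF Suc.prems]]]], of "-1"]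
      by simp
  moreover have "\<forall>t\<in>S. (\<lambda>t. inverse (f t)) differentiable at t"
    using Suc.prems assms(3) real_diff_of_deriv[OF inverse_has_vd] by (metis Ck.simps(2))
  ultimately show ?case by simp
qed

lemma Ck_sqrt_pos: "Ck k sqrt {0<..}"
proof (induction k)
  case 0
  show ?case by (auto intro!: real_diff_of_deriv DERIV_real_sqrt)
next
  case (Suc k)
  have "Ck k (vd sqrt) {0<..} = Ck k (\<lambda>t. (1/2) *\<^sub>R inverse (sqrt t)) {0<..}"
  proof (rule Ck_cong)
    fix t :: real assume "t \<in> {0<..}"
    then show "vd sqrt t = (1/2) *\<^sub>R inverse (sqrt t)"
      using DERIV_real_sqrt[of t] has_real_derivative_iff_has_vector_derivative vd_at
      by (metis divide_inverse_commute greaterThan_iff inverse_eq_divide mult.commute real_scaleR_def)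
  qed simp
  moreover have "Ck k (\<lambda>t. (1/2) *\<^sub>R inverse (sqrt t)) {0<..}"
    by (intro Ck_cmult Ck_inverse Suc.IH) auto
  ultimately show ?case by (auto intro!: real_diff_of_deriv DERIV_real_sqrt)
qed

lemma Ck_sqrt:
  assumes "open S" "Ck k f S" "\<And>t. t \<in> S \<Longrightarrow> f t > 0"
  shows "Ck k (\<lambda>t. sqrt (f t)) S"
  using Ck_compose[OF assms(1) _ _ Ck_sqrt_pos assms(2)] assms(3) by auto

lemma Ck_poly_curve:
  assumes "\<And>x. (V has_vector_derivative V1 x) (at x)"
    "\<And>x. (V1 has_vector_derivative V2 x) (at x)"
    "\<And>x. (V2 has_vector_derivative 0) (at x)"
  shows "Ck k V UNIV"
proof -
  have d: "vd V = V1" "vd V1 = V2" "vd V2 = (\<lambda>x. 0)"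
    using assms by (auto intro!: ext vd_at)
  have diff: "V differentiable at x" "V1 differentiable at x" "V2 differentiable at x" for x
    using assms differentiable_def has_vector_derivative_def by blast+
  have c2: "Ck k V2 UNIV" for k
    by (cases k) (auto simp: d diff Ck_const)
  have c1: "Ck k V1 UNIV" for k
    by (cases k) (auto simp: d diff c2)
  show ?thesis
    by (cases k) (auto simp: d diff c1)
qed

lemma lor_scaleR_left[simp]: "lor (a *\<^sub>R x) y = a * lor x y"
  and lor_scaleR_right[simp]: "lor x (a *\<^sub>R y) = a * lor x y"
  and lor_add_left[simp]: "lor (x + z) y = lor x y + lor z y"
  and lor_add_right[simp]: "lor x (y + z) = lor x y + lor x z"
  and lor_diff_left[simp]: "lor (x - z) y = lor x y - lor z y"
  and lor_diff_right[simp]: "lor x (y - z) = lor x y - lor x z"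
  and lor_minus_left[simp]: "lor (- x) y = - lor x y"
  and lor_minus_right[simp]: "lor x (- y) = - lor x y"
  and lor_sym: "lor x y = lor y x"
  by (simp_all add: lor_def algebra_simps)

lemma lcross_lin: "lcross (\<alpha> *\<^sub>R x) (\<beta> *\<^sub>R x + \<gamma> *\<^sub>R y) = (\<alpha> * \<gamma>) *\<^sub>R lcross x y"
  unfolding lcross_def by (simp add: vec_eq_iff forall_3 algebra_simps)

lemma det3_expand: "det3 a b c =
   a$1 * b$2 * c$3 - a$1 * b$3 * c$2 - a$2 * b$1 * c$3 + a$2 * b$3 * c$1 + a$3 * b$1 * c$2 - a$3 * b$2 * c$1"
  unfolding det3_def det_3 by (simp add: algebra_simps)

lemma det3_lin: "det3 (\<alpha> *\<^sub>R x) (\<beta> *\<^sub>R x + \<gamma> *\<^sub>R y) (\<delta> *\<^sub>R x + \<mu> *\<^sub>R y + \<nu> *\<^sub>R z)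
   = \<alpha> * \<gamma> * \<nu> * det3 x y z"
  unfolding det3_expand by (simp add: algebra_simps)

lemma Ck_subset: "Ck k f Y \<Longrightarrow> S \<subseteq> Y \<Longrightarrow> Ck k f S"
  unfolding Ck_iff by blast

lemma Ck_inverse_fun:
  fixes S \<sigma> F :: "real \<Rightarrow> real"
  assumes "open X" "open I" "\<forall>k. Ck k F X" "\<sigma> ` I \<subseteq> X" "\<And>x. x \<in> X \<Longrightarrow> F x \<noteq> 0"
    "\<And>t. t \<in> I \<Longrightarrow> (\<sigma> has_real_derivative inverse (F (\<sigma> t))) (at t)"
  shows "Ck k \<sigma> I"
proof (induction k)
  case 0
  then show ?case using assms(6) real_diff_of_deriv by auto
next
  case (Suc k)
  have "Ck k (vd \<sigma>) I = Ck k (\<lambda>t. inverse (F (\<sigma> t))) I"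
    by (rule Ck_cong[OF assms(2)])
       (use assms(6) has_real_derivative_iff_has_vector_derivative vd_at in blast)
  moreover have "Ck k (\<lambda>t. inverse (F (\<sigma> t))) I"
  proof (rule Ck_inverse[OF assms(2)])
    show "Ck k (\<lambda>t. F (\<sigma> t)) I"
      by (rule Ck_compose[OF assms(2) assms(1) assms(4)]) (use assms(3) Suc in auto)
    show "F (\<sigma> t) \<noteq> 0" if "t \<in> I" for t using assms(4,5) that by auto
  qed
  ultimately show ?case using assms(6) real_diff_of_deriv by auto
qed

lemma reparam:
  fixes F :: "real \<Rightarrow> real"
  assumes Y: "open Y" "{a0..b0} \<subseteq> Y" and ab: "a0 < up" "up < b0"
    and FC: "\<forall>k. Ck k F Y" and Fpos: "\<And>u. u \<in> Y \<Longrightarrow> F u > 0"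
  obtains S \<sigma> where
    "\<forall>k. Ck k S {a0<..<b0}"
    "\<forall>u\<in>{a0<..<b0}. (S has_real_derivative F u) (at u)"
    "\<forall>u\<in>{a0<..<b0}. S u \<in> {S a0<..<S b0} \<and> \<sigma> (S u) = u"
    "\<forall>t\<in>{S a0<..<S b0}. \<sigma> t \<in> {a0<..<b0} \<and> S (\<sigma> t) = t \<and>
        (\<sigma> has_real_derivative inverse (F (\<sigma> t))) (at t)"
    "\<forall>k. Ck k \<sigma> {S a0<..<S b0}"
proof -
  define S where "S u = integral {a0..u} F" for u
  have Fdiff: "F differentiable at u" if "u \<in> Y" for u using FC that by (metis Ck_diff)
  have Fcont: "continuous_on {a0..b0} F"
    using Y Fdiff by (meson continuous_at_imp_continuous_on differentiable_imp_continuous_within subsetD)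
  have Sder: "(S has_real_derivative F u) (at u)" if "u \<in> {a0<..<b0}" for u
  proof -
    have "(S has_vector_derivative F u) (at u within {a0..b0})"
      unfolding S_def using integral_has_vector_derivative[OF Fcont] that by auto
    then have "(S has_vector_derivative F u) (at u within {a0<..<b0})"
      by (rule has_vector_derivative_within_subset) auto
    then show ?thesis
      using has_vector_derivative_within_open[of u "{a0<..<b0}"] that
        has_real_derivative_iff_has_vector_derivative by auto
  qed
  have Scont: "continuous_on {a0..b0} S"
    unfolding S_def by (rule indefinite_integral_continuous_1) (use Fcont integrable_continuous_real in auto)
  have Smono: "S x < S y" if "a0 \<le> x" "x < y" "y \<le> b0" for x y
  proof (rule DERIV_pos_imp_increasing_open[OF that(2)])
    fix z assume "x < z" "z < y"
    then show "\<exists>d. (S has_real_derivative d) (at z) \<and> d > 0"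
    proof -
      have "z \<in> Y" using Y(2) that \<open>x < z\<close> \<open>z < y\<close> by auto
      moreover have "z \<in> {a0<..<b0}" using that \<open>x < z\<close> \<open>z < y\<close> by auto
      ultimately show ?thesis using Sder Fpos by blast
    qed
  next
    show "continuous_on {x..y} S" using Scont by (rule continuous_on_subset) (use that in auto)
  qed
  have inj: "inj_on S {a0<..<b0}"
  proof (rule inj_onI)
    fix x y assume xy: "x \<in> {a0<..<b0}" "y \<in> {a0<..<b0}" "S x = S y"
    show "x = y"
    proof (rule ccontr)
      assume "x \<noteq> y"
      then consider "x < y" | "y < x" by linarith
      then show False
      proof cases
        case 1 then show False using Smono[of x y] xy by auto
      next
        case 2 then show False using Smono[of y x] xy by auto
      qed
    qed
  qed
  have img: "S ` {a0<..<b0} = {S a0<..<S b0}"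
  proof
    show "S ` {a0<..<b0} \<subseteq> {S a0<..<S b0}" using Smono by auto
    show "{S a0<..<S b0} \<subseteq> S ` {a0<..<b0}"
    proof
      fix y assume y: "y \<in> {S a0<..<S b0}"
      obtain x where x: "a0 \<le> x" "x \<le> b0" "S x = y"
        using IVT'[of S a0 y b0] y Scont ab by auto
      have "x \<noteq> a0" "x \<noteq> b0" using x y by auto
      then show "y \<in> S ` {a0<..<b0}" using x by auto
    qed
  qed
  define \<sigma> where "\<sigma> = inv_into {a0<..<b0} S"
  have sig1: "\<sigma> t \<in> {a0<..<b0}" "S (\<sigma> t) = t" if "t \<in> {S a0<..<S b0}" for t
  proof -
    have "t \<in> S ` {a0<..<b0}" using that img by simp
    then show "\<sigma> t \<in> {a0<..<b0}" "S (\<sigma> t) = t" unfolding \<sigma>_def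
      by (rule inv_into_into, rule f_inv_into_f)
  qed
  have sig2: "\<sigma> (S u) = u" if "u \<in> {a0<..<b0}" for u
    unfolding \<sigma>_def using inv_into_f_f[OF inj that] .
  have sigder: "(\<sigma> has_real_derivative inverse (F (\<sigma> t))) (at t)" if t: "t \<in> {S a0<..<S b0}" for t
  proof (rule DERIV_inverse_function[where a="S a0" and b="S b0"])
    show "(S has_real_derivative F (\<sigma> t)) (at (\<sigma> t))" using Sder sig1 t by blast
    have "\<sigma> t \<in> Y" using sig1[OF t] Y(2) by auto
    then show "F (\<sigma> t) \<noteq> 0" using Fpos by (metis less_irrefl)
    show "S a0 < t" "t < S b0" using t by auto
    show "S (\<sigma> y) = y" if "S a0 < y" "y < S b0" for y using sig1 that by auto
    define x where "x = \<sigma> t"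
    have x: "a0 < x" "x < b0" using sig1 t x_def by auto
    define d where "d = min (x - a0) (b0 - x) / 2"
    have d: "d > 0" using x d_def by auto
    have "isCont \<sigma> (S x)"
    proof (rule isCont_inverse_function[where f=S and g=\<sigma> and x=x, OF d])
      have zz: "z \<in> {a0<..<b0}" if "\<bar>z - x\<bar> \<le> d" for z using that d_def x by (auto; arith)
      show "\<sigma> (S z) = z" if "\<bar>z - x\<bar> \<le> d" for z using sig2 zz[OF that] by blast
      show "isCont S z" if "\<bar>z - x\<bar> \<le> d" for z using Sder zz[OF that] by (meson DERIV_isCont)
    qed
    then show "isCont \<sigma> t" using sig1 t x_def by simp
  qed
  have Sdiff: "\<forall>t\<in>{a0<..<b0}. S differentiable at t" using Sder real_diff_of_deriv by blast
  have SC: "Ck k S {a0<..<b0}" for k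
  proof (cases k)
    case 0 then show ?thesis using Sdiff by simp
  next
    case (Suc m)
    have "Ck m (vd S) {a0<..<b0} = Ck m F {a0<..<b0}"
    proof (rule Ck_cong)
      fix t assume "t \<in> {a0<..<b0}"
      then show "vd S t = F t" using Sder[unfolded has_real_derivative_iff_has_vector_derivative] vd_at by blast
    qed simp
    moreover have "{a0<..<b0} \<subseteq> Y" using Y(2) by auto
    then have "Ck m F {a0<..<b0}" using FC Ck_subset by blast
    ultimately show ?thesis using Suc Sdiff by simp
  qed
  have sigC: "Ck k \<sigma> {S a0<..<S b0}" for k
  proof (rule Ck_inverse_fun[where X="{a0<..<b0}" and F=F])
    have sub: "{a0<..<b0} \<subseteq> Y" using Y(2) by auto
    then show "\<forall>k. Ck k F {a0<..<b0}" using FC Ck_subset by blast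
    show "F x \<noteq> 0" if "x \<in> {a0<..<b0}" for x using Fpos sub that by (metis less_irrefl subsetD)
  qed (use sig1 sigder in auto)
  show ?thesis
    by (rule that[of S \<sigma>]) (use SC Sder sig1 sig2 sigder sigC img in auto)
qed

lemma chain_vd:
  assumes "h differentiable (at t)" "V differentiable (at (h t))"
  shows "((\<lambda>t. V (h t)) has_vector_derivative vd h t *\<^sub>R vd V (h t)) (at t)"
  using vector_diff_chain_at[OF vd_has[OF assms(1)] vd_has[OF assms(2)]] by (simp add: o_def)

lemma curve:
  fixes g w :: "real \<Rightarrow> real" and A V V1 V2 :: "real \<Rightarrow> real^3" and e :: real
  assumes X: "open X" "{a0..b0} \<subseteq> X" and ab: "a0 < up" "up < b0"
    and gC: "\<forall>k. Ck k g X" and wC: "\<forall>k. Ck k w X"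
    and e: "e = 1 \<or> e = -1"
    and sgn: "\<And>u. u \<in> X \<Longrightarrow> e * vd g u * w u < 0"
    and Ad: "\<And>u. u \<in> X \<Longrightarrow> (A has_vector_derivative ((1/2) * w u) *\<^sub>R V (g u)) (at u)"
    and Vd: "\<And>x. (V has_vector_derivative V1 x) (at x)" "\<And>x. (V1 has_vector_derivative V2 x) (at x)"
       "\<And>x. (V2 has_vector_derivative 0) (at x)"
    and Valg: "\<And>x. lor (V x) (V x) = 0" "\<And>x. lor (V x) (V1 x) = 0" "\<And>x. lor (V1 x) (V1 x) = 4"
      "\<And>x. V x \<noteq> 0" "\<And>x. lcross (V x) (V1 x) \<noteq> 0" "\<And>x. det3 (V x) (V1 x) (V2 x) = -8"
  obtains \<sigma> S I h \<phi> u0 c where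
    "open I" "is_interval I" "u0 \<in> I" "\<sigma> u0 = up"
    "\<forall>t\<in>I. \<sigma> t \<in> {a0<..<b0} \<and> S (\<sigma> t) = t"
    "\<forall>u\<in>{a0<..<b0}. S u \<in> I \<and> \<sigma> (S u) = u"
    "\<forall>k. Ck k \<sigma> I" "\<forall>k. Ck k S {a0<..<b0}"
    "\<forall>k. Ck k h I" "\<forall>t\<in>I. vd h t \<noteq> 0" "\<forall>t\<in>I. h t = g (\<sigma> t)"
    "\<phi> u0 = 0"
    "\<forall>t\<in>I. (\<phi> has_vector_derivative (- e / (2 * vd h t)) *\<^sub>R V (h t)) (at t)"
    "\<forall>t\<in>I. A (\<sigma> t) = (1/2) *\<^sub>R \<phi> t + A up"
    "\<forall>k. Ck k \<phi> I"
    "\<forall>t\<in>I. vd \<phi> t = c t *\<^sub>R V (h t) \<and> vd (vd \<phi>) t = vd c t *\<^sub>R V (h t) + (-e/2) *\<^sub>R V1 (h t)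
        \<and> c t \<noteq> 0"
    "null_curve_on \<phi> I" "nondegenerate_on \<phi> I" "pseudo_arclength_on \<phi> I"
    "\<forall>t\<in>I. null_orientation \<phi> t = e"
proof -
  have ee: "e * e = 1" using e by auto
  define F where "F u = sqrt (-2 * e * vd g u * w u)" for u
  have Fpos: "F u > 0" if "u \<in> X" for u using sgn[OF that] unfolding F_def by (simp add: mult.commute mult.left_commute)
  have FC: "\<forall>k. Ck k F X"
  proof
    fix k
    have "Ck k (\<lambda>u. (-2 * e) * vd g u * w u) X"
      using gC wC by (intro Ck_mult[OF X(1)] Ck_const Ck_vd) auto
    then show "Ck k F X" unfolding F_def
      by (intro Ck_sqrt[OF X(1)]) (use sgn in \<open>auto simp: algebra_simps\<close>)
  qed
  obtain S \<sigma> where S1: "\<forall>k. Ck k S {a0<..<b0}"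
    and S2: "\<forall>u\<in>{a0<..<b0}. (S has_real_derivative F u) (at u)"
    and S3: "\<forall>u\<in>{a0<..<b0}. S u \<in> {S a0<..<S b0} \<and> \<sigma> (S u) = u"
    and S4: "\<forall>t\<in>{S a0<..<S b0}. \<sigma> t \<in> {a0<..<b0} \<and> S (\<sigma> t) = t \<and>
        (\<sigma> has_real_derivative inverse (F (\<sigma> t))) (at t)"
    and S5: "\<forall>k. Ck k \<sigma> {S a0<..<S b0}"
    using reparam[OF X ab FC Fpos] by metis
  define I where "I = {S a0<..<S b0}"
  define u0 where "u0 = S up"
  have oI: "open I" and iI: "is_interval I" unfolding I_def by (auto simp: is_interval_def)
  have upI: "up \<in> {a0<..<b0}" using ab by auto
  have u0I: "u0 \<in> I" and su0: "\<sigma> u0 = up" using S3 upI unfolding u0_def I_def by auto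
  have sigX: "\<sigma> t \<in> X" if "t \<in> I" for t
  proof -
    have "\<sigma> t \<in> {a0<..<b0}" using S4 that unfolding I_def by blast
    then have "\<sigma> t \<in> {a0..b0}" by auto
    then show ?thesis using X(2) by blast
  qed
  have sigimg: "\<sigma> ` I \<subseteq> X" using sigX by auto
  have sigder: "(\<sigma> has_real_derivative inverse (F (\<sigma> t))) (at t)" if "t \<in> I" for t
    using S4 that unfolding I_def by auto
  define h where "h t = g (\<sigma> t)" for t
  have hC: "Ck k h I" for k
    unfolding h_def by (rule Ck_compose[OF oI X(1) sigimg]) (use gC S5 I_def in auto)
  have gdiff: "g differentiable at u" if "u \<in> X" for u using gC that Ck_diff by blast
  have hder: "(h has_real_derivative vd g (\<sigma> t) * inverse (F (\<sigma> t))) (at t)" if "t \<in> I" for t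
    unfolding h_def by (rule DERIV_chain2[OF real_vd_has[OF gdiff[OF sigX[OF that]]] sigder[OF that]])
  have vdh: "vd h t = vd g (\<sigma> t) * inverse (F (\<sigma> t))" if "t \<in> I" for t
    using hder[OF that] vd_at has_real_derivative_iff_has_vector_derivative by blast
  have vdh0: "vd h t \<noteq> 0" if "t \<in> I" for t
    using vdh[OF that] sgn[OF sigX[OF that]] Fpos[OF sigX[OF that]] by auto
  define c where "c t = (-e/2) * inverse (vd h t)" for t
  have cC: "Ck k c I" for k
    unfolding c_def by (intro Ck_mult[OF oI] Ck_const Ck_inverse[OF oI] Ck_vd) (use hC vdh0 in auto)
  have ch: "c t * vd h t = -e/2" if "t \<in> I" for t using vdh0[OF that] unfolding c_def by simp
  have c0: "c t \<noteq> 0" if "t \<in> I" for t using vdh0[OF that] e unfolding c_def by auto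
  define \<phi> where "\<phi> t = 2 *\<^sub>R (A (\<sigma> t) - A up)" for t
  have phi0: "\<phi> u0 = 0" unfolding \<phi>_def su0 by simp
  have Aphi: "A (\<sigma> t) = (1/2) *\<^sub>R \<phi> t + A up" for t unfolding \<phi>_def by (simp add: algebra_simps)
  have phider: "(\<phi> has_vector_derivative c t *\<^sub>R V (h t)) (at t)" if t: "t \<in> I" for t
  proof -
    let ?s = "\<sigma> t"
    have sX: "?s \<in> X" using sigX[OF t] .
    have d1: "((A \<circ> \<sigma>) has_vector_derivative (inverse (F ?s) *\<^sub>R (((1/2) * w ?s) *\<^sub>R V (g ?s)))) (at t)"
      by (rule vector_diff_chain_at[OF sigder[OF t, unfolded has_real_derivative_iff_has_vector_derivative] Ad[OF sX]])
    have d2: "(\<phi> has_vector_derivative 2 *\<^sub>R (inverse (F ?s) *\<^sub>R (((1/2) * w ?s) *\<^sub>R V (g ?s)))) (at t)"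
      unfolding \<phi>_def using d1 unfolding o_def
      by (intro derivative_eq_intros) auto
    have FF: "F ?s * F ?s = -2 * e * vd g ?s * w ?s" unfolding F_def
      using sgn[OF sX] by (simp add: algebra_simps)
    have gne: "vd g ?s \<noteq> 0" using sgn[OF sX] by auto
    have Fne: "F ?s \<noteq> 0" using Fpos[OF sX] by simp
    have "2 * (inverse (F ?s) * ((1/2) * w ?s)) = c t"
      unfolding c_def vdh[OF t] using FF gne Fne ee
      by (simp add: field_simps)
    then show ?thesis using d2 unfolding h_def by (simp add: scaleR_scaleR)
  qed
  have vdphi: "vd \<phi> t = c t *\<^sub>R V (h t)" if "t \<in> I" for t using phider[OF that] vd_at by blast
  have VC: "Ck k V UNIV" "Ck k V1 UNIV" for k
    using Ck_poly_curve[OF Vd] Ck_poly_curve[OF Vd(2,3) has_vector_derivative_const] by blast+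
  have Vdiff: "V differentiable at x" "V1 differentiable at x" "V2 differentiable at x" for x
    using Vd differentiable_def has_vector_derivative_def by blast+
  have vdV: "vd V x = V1 x" "vd V1 x = V2 x" for x using Vd vd_at by blast+
  have VhC: "Ck k (\<lambda>t. V (h t)) I" "Ck k (\<lambda>t. V1 (h t)) I" for k
    by (rule Ck_compose[OF oI open_UNIV]; use VC hC in simp)+
  have phiC: "Ck k \<phi> I" for k
  proof (cases k)
    case 0 then show ?thesis using phider differentiable_def has_vector_derivative_def by (simp; blast)
  next
    case (Suc m)
    have "Ck m (vd \<phi>) I = Ck m (\<lambda>t. c t *\<^sub>R V (h t)) I" by (rule Ck_cong[OF oI vdphi])
    moreover have "Ck m (\<lambda>t. c t *\<^sub>R V (h t)) I" by (rule Ck_scaleR[OF oI cC VhC(1)])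
    ultimately show ?thesis using Suc phider differentiable_def has_vector_derivative_def by (simp; blast)
  qed
  have hdiff: "h differentiable at t" if "t \<in> I" for t using hC Ck_diff that by blast
  have cdiff: "c differentiable at t" "vd c differentiable at t" if "t \<in> I" for t
    using cC[of 1] cC[of 2] that by (auto simp: numeral_2_eq_2)
  have vd2: "vd (vd \<phi>) t = vd c t *\<^sub>R V (h t) + (-e/2) *\<^sub>R V1 (h t)" if t: "t \<in> I" for t
  proof -
    have "vd (vd \<phi>) t = vd (\<lambda>t. c t *\<^sub>R V (h t)) t" by (rule vd_cong[OF oI vdphi t])
    also have "\<dots> = c t *\<^sub>R (vd h t *\<^sub>R V1 (h t)) + vd c t *\<^sub>R V (h t)"
      using chain_vd[OF hdiff[OF t] Vdiff(1)] vdV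
      by (intro vd_at has_vector_derivative_scaleR real_vd_has cdiff t) auto
    also have "\<dots> = vd c t *\<^sub>R V (h t) + (-e/2) *\<^sub>R V1 (h t)"
      using ch[OF t] by (simp add: scaleR_scaleR)
    finally show ?thesis .
  qed
  have vd3: "vd (vd (vd \<phi>)) t = vd (vd c) t *\<^sub>R V (h t) + (vd c t * vd h t) *\<^sub>R V1 (h t) + ((-e/2) * vd h t) *\<^sub>R V2 (h t)"
    if t: "t \<in> I" for t
  proof -
    have "vd (vd (vd \<phi>)) t = vd (\<lambda>t. vd c t *\<^sub>R V (h t) + (-e/2) *\<^sub>R V1 (h t)) t" by (rule vd_cong[OF oI vd2 t])
    also have "\<dots> = (vd c t *\<^sub>R (vd h t *\<^sub>R V1 (h t)) + vd (vd c) t *\<^sub>R V (h t)) + (-e/2) *\<^sub>R (vd h t *\<^sub>R V2 (h t))"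
    proof (rule vd_at, rule has_vector_derivative_add)
      show "((\<lambda>t. vd c t *\<^sub>R V (h t)) has_vector_derivative vd c t *\<^sub>R (vd h t *\<^sub>R V1 (h t)) + vd (vd c) t *\<^sub>R V (h t)) (at t)"
        using chain_vd[OF hdiff[OF t] Vdiff(1)] vdV
        by (intro has_vector_derivative_scaleR real_vd_has cdiff t) auto
      have d3a: "((\<lambda>t. V1 (h t)) has_vector_derivative vd h t *\<^sub>R V2 (h t)) (at t)"
        using chain_vd[OF hdiff[OF t] Vdiff(2)] vdV by simp
      show "((\<lambda>t. (-e/2) *\<^sub>R V1 (h t)) has_vector_derivative (-e/2) *\<^sub>R (vd h t *\<^sub>R V2 (h t))) (at t)"
        using has_vector_derivative_scaleR[OF DERIV_const d3a, of "-e/2"] by simp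
    qed
    also have "\<dots> = vd (vd c) t *\<^sub>R V (h t) + (vd c t * vd h t) *\<^sub>R V1 (h t) + ((-e/2) * vd h t) *\<^sub>R V2 (h t)"
      by (simp add: scaleR_scaleR algebra_simps)
    finally show ?thesis .
  qed
  have smooth: "smooth1_on \<phi> I" unfolding smooth1_iff using phiC by blast
  have null: "null_curve_on \<phi> I"
    unfolding null_curve_on_def using smooth vdphi c0 Valg by auto
  have nondeg: "nondegenerate_on \<phi> I"
    unfolding nondegenerate_on_def
  proof
    fix t assume t: "t \<in> I"
    have "lcross (vd \<phi> t) (vd (vd \<phi>) t) = (c t * (-e/2)) *\<^sub>R lcross (V (h t)) (V1 (h t))"
      unfolding vdphi[OF t] vd2[OF t] by (rule lcross_lin)
    then show "lcross (vd \<phi> t) (vd (vd \<phi>) t) \<noteq> 0" using c0[OF t] e Valg(5) by auto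
  qed
  have pa: "pseudo_arclength_on \<phi> I"
    unfolding pseudo_arclength_on_def
  proof
    fix t assume t: "t \<in> I"
    show "lor (vd (vd \<phi>) t) (vd (vd \<phi>) t) = 1"
    proof -
      have "lor (vd (vd \<phi>) t) (vd (vd \<phi>) t) = (e * e) * (lor (V1 (h t)) (V1 (h t)) / 4)"
        unfolding vd2[OF t] using Valg lor_sym[of "V1 (h t)" "V (h t)"] by (simp add: algebra_simps)
      then show ?thesis using ee Valg(3) by simp
    qed
  qed
  have orient: "null_orientation \<phi> t = e" if t: "t \<in> I" for t
  proof -
    have "det3 (vd \<phi> t) (vd (vd \<phi>) t) (vd (vd (vd \<phi>)) t)
        = c t * (-e/2) * ((-e/2) * vd h t) * det3 (V (h t)) (V1 (h t)) (V2 (h t))"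
      unfolding vdphi[OF t] vd2[OF t] vd3[OF t] by (rule det3_lin)
    also have "\<dots> = (c t * vd h t) * (e * e) * (-2)" unfolding Valg(6) by (simp add: algebra_simps)
    also have "\<dots> = e" unfolding ch[OF t] ee by simp
    finally show ?thesis unfolding null_orientation_def using e by auto
  qed
  have cform0: "(-e/2) * inverse (x::real) = - e / (2 * x)" for x by (simp add: field_simps)
  have cform: "c t = - e / (2 * vd h t)" for t unfolding c_def by (rule cform0)
  have phider2: "\<forall>t\<in>I. (\<phi> has_vector_derivative (- e / (2 * vd h t)) *\<^sub>R V (h t)) (at t)"
  proof
    fix t assume "t \<in> I"
    from phider[OF this] show "(\<phi> has_vector_derivative (- e / (2 * vd h t)) *\<^sub>R V (h t)) (at t)"
      unfolding cform .
  qed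
  have f5: "\<forall>t\<in>I. \<sigma> t \<in> {a0<..<b0} \<and> S (\<sigma> t) = t" using S4 unfolding I_def by blast
  have f6: "\<forall>u\<in>{a0<..<b0}. S u \<in> I \<and> \<sigma> (S u) = u" using S3 unfolding I_def by blast
  have f7: "\<forall>k. Ck k \<sigma> I" using S5 unfolding I_def by blast
  have f9: "\<forall>k. Ck k h I" using hC by blast
  have f10: "\<forall>t\<in>I. vd h t \<noteq> 0" using vdh0 by blast
  have f11: "\<forall>t\<in>I. h t = g (\<sigma> t)" unfolding h_def by blast
  have f14: "\<forall>t\<in>I. A (\<sigma> t) = (1/2) *\<^sub>R \<phi> t + A up" using Aphi by blast
  have f15: "\<forall>k. Ck k \<phi> I" using phiC by blast
  have f16: "\<forall>t\<in>I. vd \<phi> t = c t *\<^sub>R V (h t) \<and> vd (vd \<phi>) t = vd c t *\<^sub>R V (h t) + (-e/2) *\<^sub>R V1 (h t)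
        \<and> c t \<noteq> 0" using vdphi vd2 c0 by blast
  have f20: "\<forall>t\<in>I. null_orientation \<phi> t = e" using orient by blast
  show ?thesis by (rule that[OF oI iI u0I su0 f5 f6 f7 S1 f9 f10 f11 phi0 phider2 f14 f15 f16 null nondeg pa f20])
qed

section \<open>Concrete null vectors\<close>

definition av :: "real \<Rightarrow> real^3" where "av g = vector [-1 - g^2, 1 - g^2, 2 * g]"
definition av1 :: "real \<Rightarrow> real^3" where "av1 g = vector [-2 * g, -2 * g, 2]"
definition av2 :: "real \<Rightarrow> real^3" where "av2 g = vector [-2, -2, 0]"
definition bv :: "real \<Rightarrow> real^3" where "bv g = vector [1 + g^2, 1 - g^2, -2 * g]"
definition bv1 :: "real \<Rightarrow> real^3" where "bv1 g = vector [2 * g, -2 * g, -2]"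
definition bv2 :: "real \<Rightarrow> real^3" where "bv2 g = vector [2, -2, 0]"
definition nv :: "real \<Rightarrow> real \<Rightarrow> real^3" where "nv g h = vector [2 * (g + h), 2 * (g - h), -2 * (1 + g * h)]"

definition E1 :: "real^3" where "E1 = vector [1, 0, 0]"
definition E2 :: "real^3" where "E2 = vector [0, 1, 0]"
definition E3 :: "real^3" where "E3 = vector [0, 0, 1]"

lemma vec3_decomp: "(vector [x, y, z] :: real^3) = x *\<^sub>R E1 + y *\<^sub>R E2 + z *\<^sub>R E3"
  by (simp add: vec_eq_iff forall_3 E1_def E2_def E3_def)

lemma has_vector_derivative_vec3:
  assumes "(x has_real_derivative x') (at t)" "(y has_real_derivative y') (at t)" "(z has_real_derivative z') (at t)"
  shows "((\<lambda>t. vector [x t, y t, z t] :: real^3) has_vector_derivative vector [x', y', z']) (at t)"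
proof -
  have d1: "((\<lambda>t. x t *\<^sub>R E1) has_vector_derivative x' *\<^sub>R E1) (at t)"
    using has_vector_derivative_scaleR[OF assms(1) has_vector_derivative_const, of E1] by simp
  have d2: "((\<lambda>t. y t *\<^sub>R E2) has_vector_derivative y' *\<^sub>R E2) (at t)"
    using has_vector_derivative_scaleR[OF assms(2) has_vector_derivative_const, of E2] by simp
  have d3: "((\<lambda>t. z t *\<^sub>R E3) has_vector_derivative z' *\<^sub>R E3) (at t)"
    using has_vector_derivative_scaleR[OF assms(3) has_vector_derivative_const, of E3] by simp
  show ?thesis unfolding vec3_decomp by (rule has_vector_derivative_add[OF has_vector_derivative_add[OF d1 d2] d3])
qed

lemma av_der: "(av has_vector_derivative av1 x) (at x)" "(av1 has_vector_derivative av2 x) (at x)"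
   "(av2 has_vector_derivative 0) (at x)"
  and bv_der: "(bv has_vector_derivative bv1 x) (at x)" "(bv1 has_vector_derivative bv2 x) (at x)"
   "(bv2 has_vector_derivative 0) (at x)"
proof -
  have e: "(0::real^3) = vector [0,0,0]" by (simp add: vec_eq_iff forall_3)
  show "(av has_vector_derivative av1 x) (at x)" unfolding av_def av1_def
    by (rule has_vector_derivative_vec3[where t=x and x="\<lambda>g. -1 - g^2" and y="\<lambda>g. 1 - g^2" and z="\<lambda>g. 2*g", THEN has_vector_derivative_eq_rhs])
       (auto intro!: derivative_eq_intros)
  show "(av1 has_vector_derivative av2 x) (at x)" unfolding av1_def av2_def
    by (rule has_vector_derivative_vec3[where t=x and x="\<lambda>g. -2*g" and y="\<lambda>g. -2*g" and z="\<lambda>g. 2", THEN has_vector_derivative_eq_rhs])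
       (auto intro!: derivative_eq_intros)
  show "(av2 has_vector_derivative 0) (at x)" unfolding av2_def by simp
  show "(bv has_vector_derivative bv1 x) (at x)" unfolding bv_def bv1_def
    by (rule has_vector_derivative_vec3[where t=x and x="\<lambda>g. 1 + g^2" and y="\<lambda>g. 1 - g^2" and z="\<lambda>g. -2*g", THEN has_vector_derivative_eq_rhs])
       (auto intro!: derivative_eq_intros)
  show "(bv1 has_vector_derivative bv2 x) (at x)" unfolding bv1_def bv2_def
    by (rule has_vector_derivative_vec3[where t=x and x="\<lambda>g. 2*g" and y="\<lambda>g. -2*g" and z="\<lambda>g. -2", THEN has_vector_derivative_eq_rhs])
       (auto intro!: derivative_eq_intros)
  show "(bv2 has_vector_derivative 0) (at x)" unfolding bv2_def by simp
qed

lemma av_alg: "lor (av x) (av x) = 0" "lor (av x) (av1 x) = 0" "lor (av1 x) (av1 x) = 4"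
  "av x \<noteq> 0" "lcross (av x) (av1 x) \<noteq> 0" "det3 (av x) (av1 x) (av2 x) = -8"
proof -
  show "lor (av x) (av x) = 0" "lor (av x) (av1 x) = 0" "lor (av1 x) (av1 x) = 4"
    by (simp_all add: lor_def av_def av1_def power2_eq_square algebra_simps)
  have "(av x) $ 1 = -(1 + x^2)" unfolding av_def by simp
  moreover have "1 + x^2 > 0" by (simp add: add_pos_nonneg)
  ultimately have "(av x) $ 1 \<noteq> 0" by auto
  then show "av x \<noteq> 0" by auto
  have "(lcross (av x) (av1 x)) $ 1 = -(2 + 2 * x^2)" unfolding av_def av1_def lcross_def
    by (simp add: power2_eq_square algebra_simps)
  moreover have "2 + 2 * x^2 > 0" by (simp add: add_pos_nonneg)
  ultimately have "(lcross (av x) (av1 x)) $ 1 \<noteq> 0" by auto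
  then show "lcross (av x) (av1 x) \<noteq> 0" by auto
  show "det3 (av x) (av1 x) (av2 x) = -8" unfolding det3_expand av_def av1_def av2_def
    by (simp add: power2_eq_square algebra_simps)
qed

lemma bv_alg: "lor (bv x) (bv x) = 0" "lor (bv x) (bv1 x) = 0" "lor (bv1 x) (bv1 x) = 4"
  "bv x \<noteq> 0" "lcross (bv x) (bv1 x) \<noteq> 0" "det3 (bv x) (bv1 x) (bv2 x) = -8"
proof -
  show "lor (bv x) (bv x) = 0" "lor (bv x) (bv1 x) = 0" "lor (bv1 x) (bv1 x) = 4"
    by (simp_all add: lor_def bv_def bv1_def power2_eq_square algebra_simps)
  have "(bv x) $ 1 = (1 + x^2)" unfolding bv_def by simp
  moreover have "1 + x^2 > 0" by (simp add: add_pos_nonneg)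
  ultimately have "(bv x) $ 1 \<noteq> 0" by auto
  then show "bv x \<noteq> 0" by auto
  have "(lcross (bv x) (bv1 x)) $ 1 = (2 + 2 * x^2)" unfolding bv_def bv1_def lcross_def
    by (simp add: power2_eq_square algebra_simps)
  moreover have "2 + 2 * x^2 > 0" by (simp add: add_pos_nonneg)
  ultimately have "(lcross (bv x) (bv1 x)) $ 1 \<noteq> 0" by auto
  then show "lcross (bv x) (bv1 x) \<noteq> 0" by auto
  show "det3 (bv x) (bv1 x) (bv2 x) = -8" unfolding det3_expand bv_def bv1_def bv2_def
    by (simp add: power2_eq_square algebra_simps)
qed

lemma ab_alg:
  "lcross (av g) (bv h) = (1 - g * h) *\<^sub>R nv g h"
  "lor (av g) (nv g h) = 0" "lor (av1 g) (nv g h) = -4 * (1 - g * h)"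
  "lor (bv h) (nv g h) = 0" "lor (bv1 h) (nv g h) = 4 * (1 - g * h)"
  "lor (nv g h) (nv g h) = 4 * (1 - g * h)^2"
  "lor (av g) (bv h) = 2 * (1 - g * h)^2"
  unfolding av_def av1_def bv_def bv1_def nv_def lcross_def lor_def
  by (simp_all add: vec_eq_iff forall_3 power2_eq_square algebra_simps)

lemma lcross_simps[simp]:
  "lcross (a *\<^sub>R x) y = a *\<^sub>R lcross x y" "lcross x (a *\<^sub>R y) = a *\<^sub>R lcross x y"
  "lcross (x + z) y = lcross x y + lcross z y" "lcross x (y + z) = lcross x y + lcross x z"
  "lcross (x - z) y = lcross x y - lcross z y" "lcross x (y - z) = lcross x y - lcross x z"
  "lcross x x = 0"
  unfolding lcross_def by (simp_all add: vec_eq_iff forall_3 algebra_simps)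

lemma lcross_anti: "lcross y x = - lcross x y"
  unfolding lcross_def by (simp add: vec_eq_iff forall_3 algebra_simps)

lemma lor_lcross: "lor x (lcross x y) = 0" "lor y (lcross x y) = 0"
  unfolding lcross_def lor_def by (simp_all add: algebra_simps)

section \<open>Partial derivatives\<close>

lemma pd1_eq: "pd1 G (u, v) = vd (\<lambda>s. G (s, v)) u" by (simp add: pd1_def vd_def)
lemma pd2_eq: "pd2 G (u, v) = vd (\<lambda>s. G (u, s)) v" by (simp add: pd2_def vd_def)

lemma open_slice1: "open (D :: (real \<times> real) set) \<Longrightarrow> open {s. (s, v) \<in> D}"
  using continuous_open_vimage[of D "\<lambda>s. (s, v)"] by (simp add: vimage_def continuous_intros)
lemma open_slice2: "open (D :: (real \<times> real) set) \<Longrightarrow> open {s. (u, s) \<in> D}"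
  using continuous_open_vimage[of D "\<lambda>s. (u, s)"] by (simp add: vimage_def continuous_intros)

lemma pd_cong:
  assumes "open D" "(u, v) \<in> D" "\<And>q. q \<in> D \<Longrightarrow> G q = H q"
  shows "pd1 G (u, v) = pd1 H (u, v)" "pd2 G (u, v) = pd2 H (u, v)"
  unfolding pd1_eq pd2_eq
  by (rule vd_cong[OF open_slice1[OF assms(1)]], use assms in auto)
     (rule vd_cong[OF open_slice2[OF assms(1)]], use assms in auto)

lemma pd_sum:
  assumes "open D" "(u, v) \<in> D" "\<And>q. q \<in> D \<Longrightarrow> G q = P (fst q) + Q (snd q)"
    "P differentiable (at u)" "Q differentiable (at v)"
  shows "pd1 G (u, v) = vd P u" "pd2 G (u, v) = vd Q v"
proof -
  have "pd1 G (u, v) = pd1 (\<lambda>q. P (fst q) + Q (snd q)) (u, v)" by (rule pd_cong[OF assms(1-3)])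
  also have "\<dots> = vd P u" unfolding pd1_eq
    using vd_has[OF assms(4)] by (intro vd_at) (auto intro!: derivative_eq_intros)
  finally show "pd1 G (u, v) = vd P u" .
  have "pd2 G (u, v) = pd2 (\<lambda>q. P (fst q) + Q (snd q)) (u, v)" by (rule pd_cong[OF assms(1-3)])
  also have "\<dots> = vd Q v" unfolding pd2_eq
    using vd_has[OF assms(5)] by (intro vd_at) (auto intro!: derivative_eq_intros)
  finally show "pd2 G (u, v) = vd Q v" .
qed

lemma pd_rot:
  assumes "open D" "(x, y) \<in> D" "\<And>q. q \<in> D \<Longrightarrow> G q = P (fst q + snd q) + Q (snd q - fst q)"
    "P differentiable (at (x + y))" "Q differentiable (at (y - x))"
  shows "pd1 G (x, y) = vd P (x + y) - vd Q (y - x)" "pd2 G (x, y) = vd P (x + y) + vd Q (y - x)"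
proof -
  have dP: "(P has_vector_derivative vd P (x + y)) (at (x + y))" using vd_has[OF assms(4)] .
  have dQ: "(Q has_vector_derivative vd Q (y - x)) (at (y - x))" using vd_has[OF assms(5)] .
  have "pd1 G (x, y) = pd1 (\<lambda>q. P (fst q + snd q) + Q (snd q - fst q)) (x, y)" by (rule pd_cong[OF assms(1-3)])
  also have "\<dots> = vd P (x + y) - vd Q (y - x)" unfolding pd1_eq
  proof (rule vd_at)
    have a: "((\<lambda>s. s + y) has_vector_derivative 1) (at x)" by (auto intro!: derivative_eq_intros)
    have b: "((\<lambda>s. y - s) has_vector_derivative -1) (at x)" by (auto intro!: derivative_eq_intros)
    have "((\<lambda>s. P (s + y)) has_vector_derivative 1 *\<^sub>R vd P (x + y)) (at x)"
      using vector_diff_chain_at[OF a, of P] dP by (simp add: o_def)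
    moreover have "((\<lambda>s. Q (y - s)) has_vector_derivative (-1) *\<^sub>R vd Q (y - x)) (at x)"
      using vector_diff_chain_at[OF b, of Q] dQ by (simp add: o_def)
    ultimately show "((\<lambda>s. P (fst (s, y) + snd (s, y)) + Q (snd (s, y) - fst (s, y))) has_vector_derivative
        vd P (x + y) - vd Q (y - x)) (at x)"
      using has_vector_derivative_add by fastforce
  qed
  finally show "pd1 G (x, y) = vd P (x + y) - vd Q (y - x)" .
  have "pd2 G (x, y) = pd2 (\<lambda>q. P (fst q + snd q) + Q (snd q - fst q)) (x, y)" by (rule pd_cong[OF assms(1-3)])
  also have "\<dots> = vd P (x + y) + vd Q (y - x)" unfolding pd2_eq
  proof (rule vd_at)
    have a: "((\<lambda>s. x + s) has_vector_derivative 1) (at y)" by (auto intro!: derivative_eq_intros)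
    have b: "((\<lambda>s. s - x) has_vector_derivative 1) (at y)" by (auto intro!: derivative_eq_intros)
    have "((\<lambda>s. P (x + s)) has_vector_derivative 1 *\<^sub>R vd P (x + y)) (at y)"
      using vector_diff_chain_at[OF a, of P] dP by (simp add: o_def)
    moreover have "((\<lambda>s. Q (s - x)) has_vector_derivative 1 *\<^sub>R vd Q (y - x)) (at y)"
      using vector_diff_chain_at[OF b, of Q] dQ by (simp add: o_def)
    ultimately show "((\<lambda>s. P (fst (x, s) + snd (x, s)) + Q (snd (x, s) - fst (x, s))) has_vector_derivative
        vd P (x + y) + vd Q (y - x)) (at y)"
      using has_vector_derivative_add by fastforce
  qed
  finally show "pd2 G (x, y) = vd P (x + y) + vd Q (y - x)" .
qed

lemma smooth2_prod:
  fixes A B :: "real \<Rightarrow> real"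
  assumes "open X" "open Y" "\<forall>k. Ck k A X" "\<forall>k. Ck k B Y"
    "\<And>q. q \<in> X \<times> Y \<Longrightarrow> G q = (A (fst q), B (snd q))"
  shows "smooth2_on G (X \<times> Y)"
proof -
  have oXY: "open (X \<times> Y)" using assms(1,2) by (rule open_Times)
  have main: "\<exists>A B. (\<forall>k. Ck k A X) \<and> (\<forall>k. Ck k B Y) \<and> (\<forall>q\<in>X \<times> Y. pds bs G q = (A (fst q), B (snd q)))" for bs
  proof (induction bs)
    case Nil then show ?case using assms(3-5) by auto
  next
    case (Cons b bs)
    then obtain A' B' where AB: "\<forall>k. Ck k A' X" "\<forall>k. Ck k B' Y" "\<forall>q\<in>X \<times> Y. pds bs G q = (A' (fst q), B' (snd q))"
      by blast
    have Ad: "A' differentiable at u" if "u \<in> X" for u using AB(1) Ck_diff that by blast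
    have Bd: "B' differentiable at v" if "v \<in> Y" for v using AB(2) Ck_diff that by blast
    show ?case
    proof (cases b)
      case True
      have "pds (b # bs) G (u, v) = (vd A' u, 0)" if "(u, v) \<in> X \<times> Y" for u v
      proof -
        have "pds (b # bs) G (u, v) = pd1 (pds bs G) (u, v)" using True by simp
        also have "\<dots> = pd1 (\<lambda>q. (A' (fst q), B' (snd q))) (u, v)" by (rule pd_cong[OF oXY that]) (use AB in auto)
        also have "\<dots> = (vd A' u, 0)" unfolding pd1_eq fst_conv snd_conv
          by (intro vd_at has_vector_derivative_Pair vd_has Ad has_vector_derivative_const) (use that in auto)
        finally show ?thesis .
      qed
      note eq = this
      show ?thesis
      proof (rule exI[of _ "vd A'"], rule exI[of _ "\<lambda>_. 0"], intro conjI)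
        show "\<forall>k. Ck k (vd A') X" using AB(1) Ck_vd by blast
        show "\<forall>k. Ck k (\<lambda>_. 0::real) Y" using Ck_const by blast
        show "\<forall>q\<in>X \<times> Y. pds (b # bs) G q = (vd A' (fst q), 0)" using eq by auto
      qed
    next
      case False
      have "pds (b # bs) G (u, v) = (0, vd B' v)" if "(u, v) \<in> X \<times> Y" for u v
      proof -
        have "pds (b # bs) G (u, v) = pd2 (pds bs G) (u, v)" using False by simp
        also have "\<dots> = pd2 (\<lambda>q. (A' (fst q), B' (snd q))) (u, v)" by (rule pd_cong[OF oXY that]) (use AB in auto)
        also have "\<dots> = (0, vd B' v)" unfolding pd2_eq fst_conv snd_conv
          by (intro vd_at has_vector_derivative_Pair vd_has Bd has_vector_derivative_const) (use that in auto)
        finally show ?thesis .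
      qed
      note eq = this
      show ?thesis
      proof (rule exI[of _ "\<lambda>_. 0"], rule exI[of _ "vd B'"], intro conjI)
        show "\<forall>k. Ck k (vd B') Y" using AB(2) Ck_vd by blast
        show "\<forall>k. Ck k (\<lambda>_. 0::real) X" using Ck_const by blast
        show "\<forall>q\<in>X \<times> Y. pds (b # bs) G q = (0, vd B' (snd q))" using eq by auto
      qed
    qed
  qed
  show ?thesis unfolding smooth2_on_def
  proof (intro allI ballI)
    fix bs q assume q: "q \<in> X \<times> Y"
    obtain A' B' where AB: "\<forall>k. Ck k A' X" "\<forall>k. Ck k B' Y" "\<forall>q\<in>X \<times> Y. pds bs G q = (A' (fst q), B' (snd q))"
      using main by blast
    have q12: "fst q \<in> X" "snd q \<in> Y" using q by auto
    have dA: "A' differentiable at (fst q)" using Ck_diff AB(1) q12(1) by blast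
    have dB: "B' differentiable at (snd q)" using Ck_diff AB(2) q12(2) by blast
    have d1: "(\<lambda>q. A' (fst q)) differentiable at q"
      by (rule differentiable_compose[where f=A' and g=fst, OF dA]) (rule bounded_linear_imp_differentiable[OF bounded_linear_fst])
    have d2: "(\<lambda>q. B' (snd q)) differentiable at q"
      by (rule differentiable_compose[where f=B' and g=snd, OF dB]) (rule bounded_linear_imp_differentiable[OF bounded_linear_snd])
    have dP: "(\<lambda>q. (A' (fst q), B' (snd q))) differentiable at q" by (rule differentiable_Pair[OF d1 d2])
    have eqf: "(\<lambda>q. (A' (fst q), B' (snd q))) t = pds bs G t" if "t \<in> X \<times> Y" for t
      using AB(3)[rule_format, OF that] by simp
    show "pds bs G differentiable at q"
      by (rule differentiable_open_cong[OF oXY eqf q dP])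
  qed
qed

section \<open>Curvature computations\<close>

lemma ba_lcross: "lcross (bv h) (av g) = - ((1 - g * h) *\<^sub>R nv g h)"
  using lcross_anti[of "av g" "bv h"] ab_alg(1) by simp

lemma K_calc:
  fixes G :: "real \<times> real \<Rightarrow> real^3"
  assumes p1: "pd1 G w = (1/2) *\<^sub>R (c1 *\<^sub>R av g)" and p2: "pd2 G w = (1/2) *\<^sub>R (c2 *\<^sub>R bv h)"
    and p11: "pd1 (pd1 G) w = (1/2) *\<^sub>R (d1 *\<^sub>R av g + (-e1/2) *\<^sub>R av1 g)"
    and p12: "pd2 (pd1 G) w = 0"
    and p22: "pd2 (pd2 G) w = (1/2) *\<^sub>R (d2 *\<^sub>R bv h + (-e2/2) *\<^sub>R bv1 h)"
    and nz: "c1 \<noteq> 0" "c2 \<noteq> 0" "g * h \<noteq> 1"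
  shows "gauss_curv G w = (e1 * e2 / 4) / (c1 * c2 * (1 - g * h)^2 / 2)^2"
proof -
  define m where "m = c1 * c2 * (1 - g * h) / 4"
  define N where "N = lcross (pd1 G w) (pd2 G w)"
  have N: "N = m *\<^sub>R nv g h" unfolding N_def p1 p2 m_def using ab_alg(1) by (simp add: scaleR_scaleR)
  have m0: "m \<noteq> 0" using nz unfolding m_def by auto
  have NN: "lor N N = m * m * (4 * (1 - g * h)^2)" unfolding N using ab_alg(6) by simp
  have a: "m * m > 0" using m0 not_real_square_gt_zero by blast
  have b: "(1 - g * h)^2 > 0" using nz(3) by simp
  have NNpos: "lor N N > 0" unfolding NN using a b by simp
  define s where "s = sqrt (lor N N)"
  have ss: "s * s = lor N N" unfolding s_def using NNpos by simp
  have s0: "s \<noteq> 0" using NNpos unfolding s_def by simp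
  have un: "unit_normal G w = (1 / s) *\<^sub>R N" unfolding unit_normal_def N_def s_def Let_def ..
  have II11: "II11 G w = (1/s) * (m * (e1 * (1 - g * h)))"
    unfolding II11_def un p11 N by (simp add: ab_alg(2,3) algebra_simps)
  have II22: "II22 G w = (1/s) * (m * (- e2 * (1 - g * h)))"
    unfolding II22_def un p22 N by (simp add: ab_alg(4,5) algebra_simps)
  have II12: "II12 G w = 0" unfolding II12_def p12 by (simp add: lor_def)
  have l11: "lor (pd1 G w) (pd1 G w) = 0" unfolding p1 by (simp add: av_alg(1))
  have l22: "lor (pd2 G w) (pd2 G w) = 0" unfolding p2 by (simp add: bv_alg(1))
  have l12: "lor (pd1 G w) (pd2 G w) = c1 * c2 * (1 - g * h)^2 / 2" unfolding p1 p2 by (simp add: ab_alg(7))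
  have "II11 G w * II22 G w - (II12 G w)^2 = - (e1 * e2) * (m * m * (1 - g * h)^2) / (s * s)"
    unfolding II11 II22 II12 using s0 by (simp add: field_simps power2_eq_square)
  also have "\<dots> = - (e1 * e2) / 4" unfolding ss NN using a b m0 by (simp add: field_simps)
  finally have num: "II11 G w * II22 G w - (II12 G w)^2 = - (e1 * e2) / 4" .
  show ?thesis unfolding gauss_curv_def num l11 l22 l12 by (simp add: field_simps)
qed

lemma ROT_calc:
  fixes G :: "real \<times> real \<Rightarrow> real^3" and c1 c2 d1 d2 e1 e2 g h :: real
  defines "P1 \<equiv> c1 *\<^sub>R av g" and "Q1 \<equiv> c2 *\<^sub>R bv h"
    and "P2 \<equiv> d1 *\<^sub>R av g + (-e1/2) *\<^sub>R av1 g" and "Q2 \<equiv> d2 *\<^sub>R bv h + (-e2/2) *\<^sub>R bv1 h"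
  assumes p1: "pd1 G w = (1/2) *\<^sub>R (P1 - Q1)" and p2: "pd2 G w = (1/2) *\<^sub>R (P1 + Q1)"
    and p11: "pd1 (pd1 G) w = (1/2) *\<^sub>R (P2 + Q2)"
    and p12: "pd2 (pd1 G) w = (1/2) *\<^sub>R (P2 - Q2)"
    and p22: "pd2 (pd2 G) w = (1/2) *\<^sub>R (P2 + Q2)"
  shows "lor (pd1 G w) (pd1 G w) = - lor (pd2 G w) (pd2 G w)" "lor (pd1 G w) (pd2 G w) = 0"
    "e1 = e2 \<Longrightarrow> II11 G w = 0 \<and> II22 G w = 0"
    "e1 = - e2 \<Longrightarrow> II12 G w = 0"
proof -
  have PP: "lor P1 P1 = 0" "lor Q1 Q1 = 0" "lor Q1 P1 = lor P1 Q1"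
    unfolding P1_def Q1_def using av_alg(1) bv_alg(1) lor_sym[of "bv h" "av g"] by simp_all
  show "lor (pd1 G w) (pd1 G w) = - lor (pd2 G w) (pd2 G w)" unfolding p1 p2 using PP by simp
  show "lor (pd1 G w) (pd2 G w) = 0" unfolding p1 p2 using PP by simp
  define N where "N = lcross (pd1 G w) (pd2 G w)"
  have N: "N = (c1 * c2 * (1 - g * h) / 2) *\<^sub>R nv g h"
    unfolding N_def p1 p2 P1_def Q1_def
    by (simp add: ab_alg(1) ba_lcross vec_eq_iff algebra_simps)
  have un: "unit_normal G w = (1 / sqrt (lor N N)) *\<^sub>R N" unfolding unit_normal_def N_def Let_def ..
  have LP: "lor P2 (nv g h) = 2 * e1 * (1 - g * h)" "lor Q2 (nv g h) = - 2 * e2 * (1 - g * h)"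
    unfolding P2_def Q2_def by (simp_all add: ab_alg(2-5) algebra_simps)
  show "e1 = e2 \<Longrightarrow> II11 G w = 0 \<and> II22 G w = 0"
    unfolding II11_def II22_def un p11 p22 N by (simp add: LP algebra_simps)
  show "e1 = - e2 \<Longrightarrow> II12 G w = 0"
    unfolding II12_def un p12 N by (simp add: LP algebra_simps)
qed

lemma vd_aff: "f differentiable (at t) \<Longrightarrow> vd (\<lambda>t. a *\<^sub>R f t + K) t = a *\<^sub>R vd f t"
  by (rule vd_at) (auto intro!: derivative_eq_intros vd_has)

lemma vd_scal: "f differentiable (at t) \<Longrightarrow> vd (\<lambda>t. a *\<^sub>R f t) t = a *\<^sub>R vd f t"
  by (rule vd_at) (auto intro!: derivative_eq_intros vd_has)

lemma ev_neg:
  fixes F :: "real \<times> real \<Rightarrow> real"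
  assumes "isCont F p" "F p < 0"
  shows "eventually (\<lambda>q. F q < 0) (nhds p)"
  using order_tendstoD(2)[OF assms(1)[unfolded isCont_def] assms(2)] assms(2)
  by (simp add: eventually_nhds_conv_at)

lemma ev_ne:
  fixes F :: "real \<times> real \<Rightarrow> real"
  assumes "isCont F p" "F p \<noteq> c"
  shows "eventually (\<lambda>q. F q \<noteq> c) (nhds p)"
  using tendsto_imp_eventually_ne[OF assms(1)[unfolded isCont_def] assms(2)] assms(2)
  by (simp add: eventually_nhds_conv_at)

lemma sign_lemma:
  fixes e1 e2 D :: real
  assumes "e1 = 1 \<or> e1 = -1" "e2 = 1 \<or> e2 = -1" "D > 0"
  shows "((e1 * e2 / 4) / D > 0 \<longleftrightarrow> e1 = e2) \<and> ((e1 * e2 / 4) / D < 0 \<longleftrightarrow> e1 \<noteq> e2)"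
  using assms by (auto simp: divide_less_0_iff zero_less_divide_iff)

theorem theorem3p4:
  fixes f :: "real \<times> real \<Rightarrow> real^3"
    and U :: "(real \<times> real) set"
    and g1 g2 w1 w2 :: "real \<Rightarrow> real"
    and p :: "real \<times> real"
  assumes chart: "minface_chart f U g1 g2 w1 w2"
    and pU: "p \<in> U"
    and reg: "regular_pt f p"
    and nonflat: "\<not> flat_pt f p"
  shows "\<exists>(\<Phi> :: real \<times> real \<Rightarrow> real \<times> real) (I :: real set) (J :: real set)
            (h1 :: real \<Rightarrow> real) (h2 :: real \<Rightarrow> real) (\<phi> :: real \<Rightarrow> real^3) (\<psi> :: real \<Rightarrow> real^3)
            (e\<phi> :: real) (e\<psi> :: real) u0 v0.
     open I \<and> is_interval I \<and> open J \<and> is_interval J \<and> u0 \<in> I \<and> v0 \<in> J \<and>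
     \<Phi> ` (I \<times> J) \<subseteq> U \<and> open (\<Phi> ` (I \<times> J)) \<and> p \<in> \<Phi> ` (I \<times> J) \<and>
     inj_on \<Phi> (I \<times> J) \<and> smooth2_on \<Phi> (I \<times> J) \<and>
     smooth2_on (inv_into (I \<times> J) \<Phi>) (\<Phi> ` (I \<times> J)) \<and>
     smooth1_on h1 I \<and> (\<forall>u\<in>I. vd h1 u \<noteq> 0) \<and>
     smooth1_on h2 J \<and> (\<forall>v\<in>J. vd h2 v \<noteq> 0) \<and>
     e\<phi> \<in> {1, -1} \<and> e\<psi> \<in> {1, -1} \<and>
     \<phi> u0 = 0 \<and>
     (\<forall>u\<in>I. (\<phi> has_vector_derivative
        (- e\<phi> / (2 * vd h1 u)) *\<^sub>R vector [-1 - (h1 u)^2, 1 - (h1 u)^2, 2 * h1 u]) (at u)) \<and>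
     \<psi> v0 = 0 \<and>
     (\<forall>v\<in>J. (\<psi> has_vector_derivative
        (- e\<psi> / (2 * vd h2 v)) *\<^sub>R vector [1 + (h2 v)^2, 1 - (h2 v)^2, -2 * h2 v]) (at v)) \<and>
     (\<forall>u\<in>I. \<forall>v\<in>J. f (\<Phi> (u, v)) = (1/2) *\<^sub>R \<phi> u + (1/2) *\<^sub>R \<psi> v + f (\<Phi> (u0, v0))) \<and>
     null_curve_on \<phi> I \<and> nondegenerate_on \<phi> I \<and> pseudo_arclength_on \<phi> I \<and>
     (\<forall>u\<in>I. null_orientation \<phi> u = e\<phi>) \<and>
     null_curve_on \<psi> J \<and> nondegenerate_on \<psi> J \<and> pseudo_arclength_on \<psi> J \<and>
     (\<forall>v\<in>J. null_orientation \<psi> v = e\<psi>) \<and>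
     (\<forall>w\<in>I \<times> J.
        (gauss_curv (f \<circ> \<Phi>) w > 0 \<longleftrightarrow> e\<phi> = e\<psi>) \<and>
        (gauss_curv (f \<circ> \<Phi>) w < 0 \<longleftrightarrow> e\<phi> \<noteq> e\<psi>)) \<and>
     (e\<phi> = e\<psi> \<longrightarrow>
        conformal_asymptotic (\<lambda>(x, y). f (\<Phi> (x + y, y - x)))
                             {(x, y). (x + y, y - x) \<in> I \<times> J}) \<and>
     (e\<phi> \<noteq> e\<psi> \<longrightarrow>
        conformal_curvature_line (\<lambda>(x, y). f (\<Phi> (x + y, y - x)))
                                 {(x, y). (x + y, y - x) \<in> I \<times> J})"
proof -
  obtain up vp where p: "p = (up, vp)" by (cases p)
  from chart have oU: "open U" and g1s: "smooth1_on g1 (fst ` U)" and w1s: "smooth1_on w1 (fst ` U)"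
    and w1nz: "\<forall>u\<in>fst ` U. w1 u \<noteq> 0"
    and g2s: "smooth1_on g2 (snd ` U)" and w2s: "smooth1_on w2 (snd ` U)" and w2nz: "\<forall>v\<in>snd ` U. w2 v \<noteq> 0"
    and ABex: "\<exists>A B c.
        (\<forall>u\<in>fst ` U. (A has_vector_derivative
            ((1/2) * w1 u) *\<^sub>R vector [-1 - (g1 u)^2, 1 - (g1 u)^2, 2 * g1 u]) (at u)) \<and>
        (\<forall>v\<in>snd ` U. (B has_vector_derivative
            ((1/2) * w2 v) *\<^sub>R vector [1 + (g2 v)^2, 1 - (g2 v)^2, -2 * g2 v]) (at v)) \<and>
        (\<forall>(u, v)\<in>U. f (u, v) = A u + B v + c)"
    unfolding minface_chart_def by blast+
  obtain A B c0 where Ad0: "\<forall>u\<in>fst ` U. (A has_vector_derivative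
            ((1/2) * w1 u) *\<^sub>R vector [-1 - (g1 u)^2, 1 - (g1 u)^2, 2 * g1 u]) (at u)"
    and Bd0: "\<forall>v\<in>snd ` U. (B has_vector_derivative
            ((1/2) * w2 v) *\<^sub>R vector [1 + (g2 v)^2, 1 - (g2 v)^2, -2 * g2 v]) (at v)"
    and fU0: "\<forall>(u, v)\<in>U. f (u, v) = A u + B v + c0"
    using ABex by blast
  define X1 where "X1 = fst ` U"
  define X2 where "X2 = snd ` U"
  have oX1: "open X1" unfolding X1_def using oU by (rule open_image_fst)
  have oX2: "open X2" unfolding X2_def using oU by (rule open_image_snd)
  have Ad: "(A has_vector_derivative ((1/2) * w1 u) *\<^sub>R av (g1 u)) (at u)" if "u \<in> X1" for u
    using Ad0 that unfolding X1_def av_def by blast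
  have Bd: "(B has_vector_derivative ((1/2) * w2 v) *\<^sub>R bv (g2 v)) (at v)" if "v \<in> X2" for v
    using Bd0 that unfolding X2_def bv_def by blast
  have fU: "f q = A (fst q) + (B (snd q) + c0)" if "q \<in> U" for q
    using fU0 that by (cases q) (auto simp: add.assoc)
  have g1C: "\<forall>k. Ck k g1 X1" and w1C: "\<forall>k. Ck k w1 X1" and g2C: "\<forall>k. Ck k g2 X2" and w2C: "\<forall>k. Ck k w2 X2"
    using g1s w1s g2s w2s unfolding smooth1_iff X1_def X2_def by blast+
  have pU: "(up, vp) \<in> U" using pU p by simp
  have upX: "up \<in> X1" and vpX: "vp \<in> X2" unfolding X1_def X2_def using pU by force+
  have w1up: "w1 up \<noteq> 0" using w1nz upX unfolding X1_def by blast
  have w2vp: "w2 vp \<noteq> 0" using w2nz vpX unfolding X2_def by blast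
  have Adiff: "A differentiable at u" if "u \<in> X1" for u
    using Ad[OF that] differentiable_def has_vector_derivative_def by blast
  define DA where "DA u = ((1/2) * w1 u) *\<^sub>R av (g1 u)" for u
  define DB where "DB v = ((1/2) * w2 v) *\<^sub>R bv (g2 v)" for v
  have Qd: "((\<lambda>v. B v + c0) has_vector_derivative DB v) (at v)" if "v \<in> X2" for v
    using has_vector_derivative_add[OF Bd[OF that] has_vector_derivative_const[of c0]] unfolding DB_def by simp
  have Qdiff: "(\<lambda>v. B v + c0) differentiable at v" if "v \<in> X2" for v
    using Qd[OF that] differentiable_def has_vector_derivative_def by blast
  have vdA: "vd A u = DA u" if "u \<in> X1" for u using Ad[OF that] vd_at unfolding DA_def by blast
  have vdQ: "vd (\<lambda>v. B v + c0) v = DB v" if "v \<in> X2" for v using Qd[OF that] vd_at by blast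
  have fstU: "fst q \<in> X1" and sndU: "snd q \<in> X2" if "q \<in> U" for q
    using that unfolding X1_def X2_def by auto
  have pdf: "pd1 f q = DA (fst q) \<and> pd2 f q = DB (snd q)" if q: "q \<in> U" for q
  proof -
    obtain u v where uv: "q = (u, v)" by (cases q)
    have "pd1 f (u, v) = vd A u" "pd2 f (u, v) = vd (\<lambda>v. B v + c0) v"
      by (rule pd_sum[OF oU, where P=A and Q="\<lambda>v. B v + c0", OF _ fU], use q uv fstU sndU Adiff Qdiff in auto)+
    then show ?thesis using vdA vdQ fstU[OF q] sndU[OF q] uv by simp
  qed
  have g1d: "g1 differentiable at u" "w1 differentiable at u" if "u \<in> X1" for u
    using g1C w1C that Ck_diff by blast+
  have g2d: "g2 differentiable at v" "w2 differentiable at v" if "v \<in> X2" for v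
    using g2C w2C that Ck_diff by blast+
  have avd: "av differentiable at x" "bv differentiable at x" for x
    using av_der bv_der differentiable_def has_vector_derivative_def by blast+
  have vdav: "vd av x = av1 x" "vd bv x = bv1 x" for x using av_der bv_der vd_at by blast+
  have DAd: "(DA has_vector_derivative ((1/2) * w1 up) *\<^sub>R (vd g1 up *\<^sub>R av1 (g1 up)) + ((1/2) * vd w1 up) *\<^sub>R av (g1 up)) (at up)"
    unfolding DA_def using chain_vd[OF g1d(1)[OF upX] avd(1)] vdav
    by (auto intro!: has_vector_derivative_scaleR derivative_eq_intros real_vd_has g1d upX)
  have DBd: "(DB has_vector_derivative ((1/2) * w2 vp) *\<^sub>R (vd g2 vp *\<^sub>R bv1 (g2 vp)) + ((1/2) * vd w2 vp) *\<^sub>R bv (g2 vp)) (at vp)"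
    unfolding DB_def using chain_vd[OF g2d(1)[OF vpX] avd(2)] vdav
    by (auto intro!: has_vector_derivative_scaleR derivative_eq_intros real_vd_has g2d vpX)
  have DAdiff: "DA differentiable at up" using DAd differentiable_def has_vector_derivative_def by blast
  have DBdiff: "DB differentiable at vp" using DBd differentiable_def has_vector_derivative_def by blast
  have pp: "pd1 (pd1 f) (up, vp) = vd DA up \<and> pd2 (pd1 f) (up, vp) = 0 \<and> pd2 (pd2 f) (up, vp) = vd DB vp"
  proof -
    have "pd1 (pd1 f) (up, vp) = vd DA up" "pd2 (pd1 f) (up, vp) = vd (\<lambda>_. 0) vp"
      by (rule pd_sum[OF oU pU, where P=DA and Q="\<lambda>_. 0"], use pdf DAdiff in auto)+
    moreover have "pd2 (pd2 f) (up, vp) = vd DB vp"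
      by (rule pd_sum[OF oU pU, where P="\<lambda>_. 0" and Q=DB], use pdf DBdiff in auto)
    moreover have "vd (\<lambda>_. 0::real^3) vp = 0" by (rule vd_at) simp
    ultimately show ?thesis by simp
  qed
  have pf: "pd1 f (up, vp) = DA up" "pd2 f (up, vp) = DB vp" using pdf[OF pU] by simp_all
  have II12p: "II12 f (up, vp) = 0" unfolding II12_def using pp by (simp add: lor_def)
  have nf1: "vd g1 up \<noteq> 0"
  proof
    assume g0: "vd g1 up = 0"
    have "pd1 (pd1 f) (up, vp) = (vd w1 up / w1 up) *\<^sub>R pd1 f (up, vp)"
      using pp vd_at[OF DAd] g0 w1up unfolding pf DA_def by (simp add: scaleR_scaleR)
    then have "II11 f (up, vp) = 0" unfolding II11_def unit_normal_def Let_def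
      by (simp add: lor_lcross)
    then have "gauss_curv f p = 0" unfolding gauss_curv_def p II12p by simp
    then show False using nonflat reg unfolding flat_pt_def by simp
  qed
  have nf2: "vd g2 vp \<noteq> 0"
  proof
    assume g0: "vd g2 vp = 0"
    have "pd2 (pd2 f) (up, vp) = (vd w2 vp / w2 vp) *\<^sub>R pd2 f (up, vp)"
      using pp vd_at[OF DBd] g0 w2vp unfolding pf DB_def by (simp add: scaleR_scaleR)
    then have "II22 f (up, vp) = 0" unfolding II22_def unit_normal_def Let_def
      by (simp add: lor_lcross)
    then have "gauss_curv f p = 0" unfolding gauss_curv_def p II12p by simp
    then show False using nonflat reg unfolding flat_pt_def by simp
  qed
  have g12: "g1 up * g2 vp \<noteq> 1"
  proof
    assume "g1 up * g2 vp = 1"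
    then have "lcross (pd1 f p) (pd2 f p) = 0" unfolding p pf DA_def DB_def by (simp add: ab_alg(1))
    then show False using reg unfolding regular_pt_def by simp
  qed
  define e1 where "e1 = - sgn (vd g1 up * w1 up)"
  define e2 where "e2 = - sgn (vd g2 vp * w2 vp)"
  have e1v: "e1 = 1 \<or> e1 = -1" and e2v: "e2 = 1 \<or> e2 = -1"
    unfolding e1_def e2_def using nf1 nf2 w1up w2vp by (auto simp: sgn_if)
  have e1n: "e1 * vd g1 up * w1 up < 0"
  proof -
    have sx: "sgn x * x = \<bar>x\<bar>" for x :: real by (simp add: sgn_if)
    have "vd g1 up * w1 up \<noteq> 0" using nf1 w1up by simp
    then show ?thesis unfolding e1_def mult.assoc using sx[of "vd g1 up * w1 up"] by simp
  qed
  have e2n: "e2 * vd g2 vp * w2 vp < 0"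
  proof -
    have sx: "sgn x * x = \<bar>x\<bar>" for x :: real by (simp add: sgn_if)
    have "vd g2 vp * w2 vp \<noteq> 0" using nf2 w2vp by simp
    then show ?thesis unfolding e2_def mult.assoc using sx[of "vd g2 vp * w2 vp"] by simp
  qed
  have ct1: "isCont (\<lambda>q. e1 * vd g1 (fst q) * w1 (fst q)) (up, vp)"
  proof -
    have "isCont (vd g1) up" using g1C upX by (metis Ck.simps(2) Ck_vd differentiable_imp_continuous_within)
    moreover have "isCont w1 up" using g1d(2)[OF upX] differentiable_imp_continuous_within by blast
    ultimately show ?thesis
      by (intro continuous_intros isCont_o2[OF isCont_fst, where g="vd g1"] isCont_o2[OF isCont_fst, where g=w1]) auto
  qed
  have ct2: "isCont (\<lambda>q. e2 * vd g2 (snd q) * w2 (snd q)) (up, vp)"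
  proof -
    have "isCont (vd g2) vp" using g2C vpX by (metis Ck.simps(2) Ck_vd differentiable_imp_continuous_within)
    moreover have "isCont w2 vp" using g2d(2)[OF vpX] differentiable_imp_continuous_within by blast
    ultimately show ?thesis
      by (intro continuous_intros isCont_o2[OF isCont_snd, where g="vd g2"] isCont_o2[OF isCont_snd, where g=w2]) auto
  qed
  have ct3: "isCont (\<lambda>q. g1 (fst q) * g2 (snd q)) (up, vp)"
  proof -
    have "isCont g1 up" using g1d(1)[OF upX] differentiable_imp_continuous_within by blast
    moreover have "isCont g2 vp" using g2d(1)[OF vpX] differentiable_imp_continuous_within by blast
    ultimately show ?thesis
      by (intro continuous_intros isCont_o2[OF isCont_fst, where g=g1] isCont_o2[OF isCont_snd, where g=g2]) auto
  qed
  have ev: "eventually (\<lambda>q. q \<in> U \<and> e1 * vd g1 (fst q) * w1 (fst q) < 0 \<and> e2 * vd g2 (snd q) * w2 (snd q) < 0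
      \<and> g1 (fst q) * g2 (snd q) \<noteq> 1) (nhds (up, vp))"
  proof -
    have a: "eventually (\<lambda>q. q \<in> U) (nhds (up, vp))" by (rule eventually_nhds_in_open[OF oU pU])
    have b: "eventually (\<lambda>q. e1 * vd g1 (fst q) * w1 (fst q) < 0) (nhds (up, vp))" using ev_neg[OF ct1] e1n by simp
    have c: "eventually (\<lambda>q. e2 * vd g2 (snd q) * w2 (snd q) < 0) (nhds (up, vp))" using ev_neg[OF ct2] e2n by simp
    have d: "eventually (\<lambda>q. g1 (fst q) * g2 (snd q) \<noteq> 1) (nhds (up, vp))" using ev_ne[OF ct3] g12 by simp
    show ?thesis by (rule eventually_conj[OF a eventually_conj[OF b eventually_conj[OF c d]]])
  qed
  then obtain W where W: "open W" "(up, vp) \<in> W" "\<And>q. q \<in> W \<Longrightarrow> q \<in> U \<and> e1 * vd g1 (fst q) * w1 (fst q) < 0 \<and>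
      e2 * vd g2 (snd q) * w2 (snd q) < 0 \<and> g1 (fst q) * g2 (snd q) \<noteq> 1"
    unfolding eventually_nhds by blast
  obtain Y1 Y2 where Y: "open Y1" "open Y2" "(up, vp) \<in> Y1 \<times> Y2" "Y1 \<times> Y2 \<subseteq> W"
    using open_prod_elim[OF W(1,2)] by blast
  have upY: "up \<in> Y1" and vpY: "vp \<in> Y2" using Y(3) by auto
  obtain r1 where r1: "r1 > 0" "ball up r1 \<subseteq> Y1" using Y(1) upY open_contains_ball by blast
  obtain r2 where r2: "r2 > 0" "ball vp r2 \<subseteq> Y2" using Y(2) vpY open_contains_ball by blast
  define a0 where "a0 = up - r1/2"
  define b0 where "b0 = up + r1/2"
  define a1 where "a1 = vp - r2/2"
  define b1 where "b1 = vp + r2/2"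
  have ab0: "a0 < up" "up < b0" using r1 unfolding a0_def b0_def by auto
  have ab1: "a1 < vp" "vp < b1" using r2 unfolding a1_def b1_def by auto
  have box0: "{a0..b0} \<subseteq> Y1"
  proof
    fix x assume "x \<in> {a0..b0}"
    then have "x \<in> ball up r1" using r1 unfolding a0_def b0_def by (auto simp: dist_real_def abs_if)
    then show "x \<in> Y1" using r1 by blast
  qed
  have box1: "{a1..b1} \<subseteq> Y2"
  proof
    fix x assume "x \<in> {a1..b1}"
    then have "x \<in> ball vp r2" using r2 unfolding a1_def b1_def by (auto simp: dist_real_def abs_if)
    then show "x \<in> Y2" using r2 by blast
  qed
  have YW: "\<And>u v. u \<in> Y1 \<Longrightarrow> v \<in> Y2 \<Longrightarrow> (u, v) \<in> W" using Y(4) by blast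
  have Y1X: "Y1 \<subseteq> X1" using YW[OF _ vpY] W(3) fstU by force
  have Y2X: "Y2 \<subseteq> X2" using YW[OF upY] W(3) sndU by force
  have sg1: "e1 * vd g1 u * w1 u < 0" if "u \<in> Y1" for u using W(3)[OF YW[OF that vpY]] by simp
  have sg2: "e2 * vd g2 v * w2 v < 0" if "v \<in> Y2" for v using W(3)[OF YW[OF upY that]] by simp
  have g12Y: "g1 u * g2 v \<noteq> 1" if "u \<in> Y1" "v \<in> Y2" for u v using W(3)[OF YW[OF that]] by simp
  have inU: "(u, v) \<in> U" if "u \<in> Y1" "v \<in> Y2" for u v using W(3)[OF YW[OF that]] by simp
  have AdY: "(A has_vector_derivative ((1/2) * w1 u) *\<^sub>R av (g1 u)) (at u)" if "u \<in> Y1" for u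
    using Ad Y1X that by blast
  have BdY: "(B has_vector_derivative ((1/2) * w2 v) *\<^sub>R bv (g2 v)) (at v)" if "v \<in> Y2" for v
    using Bd Y2X that by blast
  have g1CY: "\<forall>k. Ck k g1 Y1" "\<forall>k. Ck k w1 Y1" using g1C w1C Y1X Ck_subset by blast+
  have g2CY: "\<forall>k. Ck k g2 Y2" "\<forall>k. Ck k w2 Y2" using g2C w2C Y2X Ck_subset by blast+
  obtain I u0 \<sigma> S h1 \<phi> c1 where C1: "open I" "is_interval I" "u0 \<in> I" "\<sigma> u0 = up"
    "\<forall>t\<in>I. \<sigma> t \<in> {a0<..<b0} \<and> S (\<sigma> t) = t"
    "\<forall>u\<in>{a0<..<b0}. S u \<in> I \<and> \<sigma> (S u) = u"
    "\<forall>k. Ck k \<sigma> I" "\<forall>k. Ck k S {a0<..<b0}"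
    "\<forall>k. Ck k h1 I" "\<forall>t\<in>I. vd h1 t \<noteq> 0" "\<forall>t\<in>I. h1 t = g1 (\<sigma> t)"
    "\<phi> u0 = 0"
    "\<forall>t\<in>I. (\<phi> has_vector_derivative (- e1 / (2 * vd h1 t)) *\<^sub>R av (h1 t)) (at t)"
    "\<forall>t\<in>I. A (\<sigma> t) = (1/2) *\<^sub>R \<phi> t + A up"
    "\<forall>k. Ck k \<phi> I"
    "\<forall>t\<in>I. vd \<phi> t = c1 t *\<^sub>R av (h1 t) \<and> vd (vd \<phi>) t = vd c1 t *\<^sub>R av (h1 t) + (-e1/2) *\<^sub>R av1 (h1 t)
        \<and> c1 t \<noteq> 0"
    "null_curve_on \<phi> I" "nondegenerate_on \<phi> I" "pseudo_arclength_on \<phi> I"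
    "\<forall>t\<in>I. null_orientation \<phi> t = e1"
    by (rule curve[OF Y(1) box0 ab0 g1CY e1v sg1 AdY av_der av_alg])
  obtain J v0 \<tau> T h2 \<psi> c2 where C2: "open J" "is_interval J" "v0 \<in> J" "\<tau> v0 = vp"
    "\<forall>t\<in>J. \<tau> t \<in> {a1<..<b1} \<and> T (\<tau> t) = t"
    "\<forall>u\<in>{a1<..<b1}. T u \<in> J \<and> \<tau> (T u) = u"
    "\<forall>k. Ck k \<tau> J" "\<forall>k. Ck k T {a1<..<b1}"
    "\<forall>k. Ck k h2 J" "\<forall>t\<in>J. vd h2 t \<noteq> 0" "\<forall>t\<in>J. h2 t = g2 (\<tau> t)"
    "\<psi> v0 = 0"
    "\<forall>t\<in>J. (\<psi> has_vector_derivative (- e2 / (2 * vd h2 t)) *\<^sub>R bv (h2 t)) (at t)"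
    "\<forall>t\<in>J. B (\<tau> t) = (1/2) *\<^sub>R \<psi> t + B vp"
    "\<forall>k. Ck k \<psi> J"
    "\<forall>t\<in>J. vd \<psi> t = c2 t *\<^sub>R bv (h2 t) \<and> vd (vd \<psi>) t = vd c2 t *\<^sub>R bv (h2 t) + (-e2/2) *\<^sub>R bv1 (h2 t)
        \<and> c2 t \<noteq> 0"
    "null_curve_on \<psi> J" "nondegenerate_on \<psi> J" "pseudo_arclength_on \<psi> J"
    "\<forall>t\<in>J. null_orientation \<psi> t = e2"
    by (rule curve[OF Y(2) box1 ab1 g2CY e2v sg2 BdY bv_der bv_alg])
  define \<Phi> where "\<Phi> = (\<lambda>q::real \<times> real. (\<sigma> (fst q), \<tau> (snd q)))"
  have Phi_app[simp]: "\<Phi> (u, v) = (\<sigma> u, \<tau> v)" for u v unfolding \<Phi>_def by simp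
  have sigY: "\<sigma> u \<in> Y1" if "u \<in> I" for u
  proof -
    have "\<sigma> u \<in> {a0<..<b0}" using C1(5) that by blast
    then show ?thesis using box0 by auto
  qed
  have tauY: "\<tau> v \<in> Y2" if "v \<in> J" for v
  proof -
    have "\<tau> v \<in> {a1<..<b1}" using C2(5) that by blast
    then show ?thesis using box1 by auto
  qed
  have img: "\<Phi> ` (I \<times> J) = {a0<..<b0} \<times> {a1<..<b1}"
  proof
    show "\<Phi> ` (I \<times> J) \<subseteq> {a0<..<b0} \<times> {a1<..<b1}" using C1(5) C2(5) by auto
    show "{a0<..<b0} \<times> {a1<..<b1} \<subseteq> \<Phi> ` (I \<times> J)"
    proof
      fix q assume q: "q \<in> {a0<..<b0} \<times> {a1<..<b1}"
      obtain x y where xy: "q = (x, y)" by (cases q)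
      have "S x \<in> I" "\<sigma> (S x) = x" "T y \<in> J" "\<tau> (T y) = y" using C1(6) C2(6) q xy by auto
      then show "q \<in> \<Phi> ` (I \<times> J)" using xy by (auto intro!: image_eqI[of _ _ "(S x, T y)"])
    qed
  qed
  have F7: "\<Phi> ` (I \<times> J) \<subseteq> U" using inU sigY tauY by auto
  have F8: "open (\<Phi> ` (I \<times> J))" unfolding img by (intro open_Times) auto
  have F9: "p \<in> \<Phi> ` (I \<times> J)" using C1(3,4) C2(3,4) p by (auto intro!: image_eqI[of _ _ "(u0, v0)"])
  have F10: "inj_on \<Phi> (I \<times> J)"
  proof (rule inj_onI)
    fix q q' assume "q \<in> I \<times> J" "q' \<in> I \<times> J" "\<Phi> q = \<Phi> q'"
    then show "q = q'" using C1(5) C2(5) unfolding \<Phi>_def by (cases q, cases q') (metis mem_Times_iff fst_conv snd_conv prod.inject)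
  qed
  have F11: "smooth2_on \<Phi> (I \<times> J)"
    by (rule smooth2_prod[OF C1(1) C2(1) C1(7) C2(7)]) (simp add: \<Phi>_def)
  have F12: "smooth2_on (inv_into (I \<times> J) \<Phi>) (\<Phi> ` (I \<times> J))"
    unfolding img
  proof (rule smooth2_prod[OF _ _ C1(8) C2(8)])
    fix q assume q: "q \<in> {a0<..<b0} \<times> {a1<..<b1}"
    obtain x y where xy: "q = (x, y)" by (cases q)
    have st: "S x \<in> I" "\<sigma> (S x) = x" "T y \<in> J" "\<tau> (T y) = y" using C1(6) C2(6) q xy by auto
    have "inv_into (I \<times> J) \<Phi> (\<Phi> (S x, T y)) = (S x, T y)" by (rule inv_into_f_f[OF F10]) (use st in auto)
    then show "inv_into (I \<times> J) \<Phi> q = (S (fst q), T (snd q))" using st xy by simp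
  qed auto
  have phid: "\<phi> differentiable at t" "vd \<phi> differentiable at t" if "t \<in> I" for t
    using C1(15) that Ck_diff[of 0] Ck_diff[OF Ck_vd[of 0]] by blast+
  have psid: "\<psi> differentiable at t" "vd \<psi> differentiable at t" if "t \<in> J" for t
    using C2(15) that Ck_diff[of 0] Ck_diff[OF Ck_vd[of 0]] by blast+
  define K0 where "K0 = A up + (B vp + c0)"
  define P where "P u = (1/2) *\<^sub>R \<phi> u + K0" for u
  define Q where "Q v = (1/2) *\<^sub>R \<psi> v" for v
  have fPhi: "f (\<Phi> (u, v)) = P u + Q v" if "u \<in> I" "v \<in> J" for u v
  proof -
    have "f (\<Phi> (u, v)) = A (\<sigma> u) + (B (\<tau> v) + c0)" using fU inU sigY tauY that by simp
    also have "\<dots> = P u + Q v" using C1(14) C2(14) that unfolding P_def Q_def K0_def by (simp add: algebra_simps)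
    finally show ?thesis .
  qed
  have f0: "f (\<Phi> (u0, v0)) = K0" using fPhi[OF C1(3) C2(3)] C1(12) C2(12) unfolding P_def Q_def by simp
  have F23: "\<forall>u\<in>I. \<forall>v\<in>J. f (\<Phi> (u, v)) = (1/2) *\<^sub>R \<phi> u + (1/2) *\<^sub>R \<psi> v + f (\<Phi> (u0, v0))"
    using fPhi f0 unfolding P_def Q_def by (simp add: algebra_simps)
  have vdP: "vd P t = (1/2) *\<^sub>R vd \<phi> t" if "t \<in> I" for t unfolding P_def by (rule vd_aff[OF phid(1)[OF that]])
  have vdQ: "vd Q t = (1/2) *\<^sub>R vd \<psi> t" if "t \<in> J" for t unfolding Q_def by (rule vd_scal[OF psid(1)[OF that]])
  have Pd: "P differentiable at t" if "t \<in> I" for t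
    unfolding P_def using phid(1)[OF that] by (auto intro!: derivative_intros)
  have Qd: "Q differentiable at t" if "t \<in> J" for t
    unfolding Q_def using psid(1)[OF that] by (auto intro!: derivative_intros)
  define P1 where "P1 t = (1/2) *\<^sub>R vd \<phi> t" for t
  define Q1 where "Q1 t = (1/2) *\<^sub>R vd \<psi> t" for t
  have P1d: "P1 differentiable at t" if "t \<in> I" for t
    unfolding P1_def using phid(2)[OF that] by (auto intro!: derivative_intros)
  have Q1d: "Q1 differentiable at t" if "t \<in> J" for t
    unfolding Q1_def using psid(2)[OF that] by (auto intro!: derivative_intros)
  have vdP1: "vd P1 t = (1/2) *\<^sub>R vd (vd \<phi>) t" if "t \<in> I" for t unfolding P1_def by (rule vd_scal[OF phid(2)[OF that]])
  have vdQ1: "vd Q1 t = (1/2) *\<^sub>R vd (vd \<psi>) t" if "t \<in> J" for t unfolding Q1_def by (rule vd_scal[OF psid(2)[OF that]])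
  have vdm: "vd (\<lambda>t. - Q1 t) t = - vd Q1 t" if "t \<in> J" for t
    using vd_scal[OF Q1d[OF that], of "-1"] by simp
  have mQ1d: "(\<lambda>t. - Q1 t) differentiable at t" if "t \<in> J" for t
    using Q1d[OF that] by (auto intro!: derivative_intros)
  have vd0: "vd (\<lambda>_. 0::real^3) t = 0" for t by (rule vd_at) simp
  have oIJ: "open (I \<times> J)" using C1(1) C2(1) by (rule open_Times)
  have Kw: "gauss_curv (f \<circ> \<Phi>) w = (e1 * e2 / 4) / (c1 (fst w) * c2 (snd w) * (1 - h1 (fst w) * h2 (snd w))^2 / 2)^2"
    if w: "w \<in> I \<times> J" for w
  proof -
    obtain u v where uv: "w = (u, v)" by (cases w)
    have u: "u \<in> I" and v: "v \<in> J" using w uv by auto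
    have G: "(f \<circ> \<Phi>) q = P (fst q) + Q (snd q)" if "q \<in> I \<times> J" for q
      using fPhi that by (cases q) auto
    have g1: "pd1 (f \<circ> \<Phi>) q = P1 (fst q) + (\<lambda>_. 0) (snd q) \<and> pd2 (f \<circ> \<Phi>) q = (\<lambda>_. 0) (fst q) + Q1 (snd q)"
      if q: "q \<in> I \<times> J" for q
    proof -
      obtain a b where ab: "q = (a, b)" by (cases q)
      have "pd1 (f \<circ> \<Phi>) (a, b) = vd P a" "pd2 (f \<circ> \<Phi>) (a, b) = vd Q b"
        by (rule pd_sum[OF oIJ, where P=P and Q=Q, OF _ G], use q ab Pd Qd in auto)+
      then show ?thesis using vdP vdQ q ab unfolding P1_def Q1_def by auto
    qed
    have a1: "pd1 (f \<circ> \<Phi>) w = (1/2) *\<^sub>R (c1 u *\<^sub>R av (h1 u))" using g1[OF w] C1(16) u uv P1_def by simp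
    have a2: "pd2 (f \<circ> \<Phi>) w = (1/2) *\<^sub>R (c2 v *\<^sub>R bv (h2 v))" using g1[OF w] C2(16) v uv Q1_def by simp
    have "pd1 (pd1 (f \<circ> \<Phi>)) (u, v) = vd P1 u" "pd2 (pd1 (f \<circ> \<Phi>)) (u, v) = vd (\<lambda>_. 0) v"
      by (rule pd_sum[OF oIJ, where P=P1 and Q="\<lambda>_. 0"], use w uv g1 P1d u in auto)+
    then have a11: "pd1 (pd1 (f \<circ> \<Phi>)) w = (1/2) *\<^sub>R (vd c1 u *\<^sub>R av (h1 u) + (-e1/2) *\<^sub>R av1 (h1 u))"
      and a12: "pd2 (pd1 (f \<circ> \<Phi>)) w = 0"
      using vdP1[OF u] C1(16) u uv vd0 by simp_all
    have "pd2 (pd2 (f \<circ> \<Phi>)) (u, v) = vd Q1 v"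
      by (rule pd_sum[OF oIJ, where P="\<lambda>_. 0" and Q=Q1], use w uv g1 Q1d v in auto)
    then have a22: "pd2 (pd2 (f \<circ> \<Phi>)) w = (1/2) *\<^sub>R (vd c2 v *\<^sub>R bv (h2 v) + (-e2/2) *\<^sub>R bv1 (h2 v))"
      using vdQ1[OF v] C2(16) v uv by simp
    have nz: "c1 u \<noteq> 0" "c2 v \<noteq> 0" "h1 u * h2 v \<noteq> 1"
      using C1(16) C2(16) u v C1(11) C2(11) g12Y sigY tauY by auto
    show ?thesis using K_calc[OF a1 a2 a11 a12 a22 nz] uv by simp
  qed
  have F32: "\<forall>w\<in>I \<times> J. (gauss_curv (f \<circ> \<Phi>) w > 0 \<longleftrightarrow> e1 = e2) \<and> (gauss_curv (f \<circ> \<Phi>) w < 0 \<longleftrightarrow> e1 \<noteq> e2)"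
  proof
    fix w assume w: "w \<in> I \<times> J"
    have nz: "c1 (fst w) \<noteq> 0" "c2 (snd w) \<noteq> 0" "h1 (fst w) * h2 (snd w) \<noteq> 1"
      using C1(16) C2(16) w C1(11) C2(11) g12Y sigY tauY by (auto simp: mem_Times_iff)
    have "c1 (fst w) * c2 (snd w) * (1 - h1 (fst w) * h2 (snd w))^2 / 2 \<noteq> 0" using nz by simp
    then have "(c1 (fst w) * c2 (snd w) * (1 - h1 (fst w) * h2 (snd w))^2 / 2)^2 > 0" by simp
    then show "(gauss_curv (f \<circ> \<Phi>) w > 0 \<longleftrightarrow> e1 = e2) \<and> (gauss_curv (f \<circ> \<Phi>) w < 0 \<longleftrightarrow> e1 \<noteq> e2)"
      unfolding Kw[OF w] by (rule sign_lemma[OF e1v e2v])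
  qed
  define D2 where "D2 = {(x, y). (x + y, y - x) \<in> I \<times> J}"
  define G2 where "G2 = (\<lambda>(x, y). f (\<Phi> (x + y, y - x)))"
  have D2eq: "D2 = (\<lambda>q. (fst q + snd q, snd q - fst q)) -` (I \<times> J)" unfolding D2_def by auto
  have oD2: "open D2" unfolding D2eq
    by (rule continuous_open_vimage[OF oIJ]) (auto intro!: continuous_intros)
  have inD2: "fst q + snd q \<in> I" "snd q - fst q \<in> J" if "q \<in> D2" for q
    using that unfolding D2_def by auto
  have G2eq: "G2 q = P (fst q + snd q) + Q (snd q - fst q)" if "q \<in> D2" for q
    using fPhi inD2[OF that] unfolding G2_def by (cases q) auto
  have G2d: "pd1 G2 q = P1 (fst q + snd q) + (\<lambda>t. - Q1 t) (snd q - fst q) \<and>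
             pd2 G2 q = P1 (fst q + snd q) + Q1 (snd q - fst q)" if q: "q \<in> D2" for q
  proof -
    obtain x y where xy: "q = (x, y)" by (cases q)
    have "pd1 G2 (x, y) = vd P (x + y) - vd Q (y - x)" "pd2 G2 (x, y) = vd P (x + y) + vd Q (y - x)"
      by (rule pd_rot[OF oD2, where P=P and Q=Q, OF _ G2eq], use q xy Pd Qd inD2 in auto)+
    then show ?thesis using vdP vdQ inD2[OF q] xy unfolding P1_def Q1_def by auto
  qed
  have rot: "lor (pd1 G2 q) (pd1 G2 q) = - lor (pd2 G2 q) (pd2 G2 q) \<and> lor (pd1 G2 q) (pd2 G2 q) = 0 \<and>
      (e1 = e2 \<longrightarrow> II11 G2 q = 0 \<and> II22 G2 q = 0) \<and> (e1 = - e2 \<longrightarrow> II12 G2 q = 0)" if q: "q \<in> D2" for q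
  proof -
    obtain x y where xy: "q = (x, y)" by (cases q)
    define u where "u = x + y"
    define v where "v = y - x"
    have u: "u \<in> I" and v: "v \<in> J" using inD2[OF q] xy u_def v_def by auto
    have b1: "pd1 G2 q = (1/2) *\<^sub>R (c1 u *\<^sub>R av (h1 u) - c2 v *\<^sub>R bv (h2 v))"
      using G2d[OF q] C1(16) C2(16) u v xy unfolding P1_def Q1_def u_def v_def by (simp add: scaleR_diff_right)
    have b2: "pd2 G2 q = (1/2) *\<^sub>R (c1 u *\<^sub>R av (h1 u) + c2 v *\<^sub>R bv (h2 v))"
      using G2d[OF q] C1(16) C2(16) u v xy unfolding P1_def Q1_def u_def v_def by (simp add: scaleR_add_right)
    have "pd1 (pd1 G2) (x, y) = vd P1 (x + y) - vd (\<lambda>t. - Q1 t) (y - x)"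
         "pd2 (pd1 G2) (x, y) = vd P1 (x + y) + vd (\<lambda>t. - Q1 t) (y - x)"
      by (rule pd_rot[OF oD2, where P=P1 and Q="\<lambda>t. - Q1 t"], use q xy G2d P1d mQ1d u v u_def v_def in auto)+
    then have b11: "pd1 (pd1 G2) q = (1/2) *\<^sub>R ((vd c1 u *\<^sub>R av (h1 u) + (-e1/2) *\<^sub>R av1 (h1 u)) + (vd c2 v *\<^sub>R bv (h2 v) + (-e2/2) *\<^sub>R bv1 (h2 v)))"
      and b12: "pd2 (pd1 G2) q = (1/2) *\<^sub>R ((vd c1 u *\<^sub>R av (h1 u) + (-e1/2) *\<^sub>R av1 (h1 u)) - (vd c2 v *\<^sub>R bv (h2 v) + (-e2/2) *\<^sub>R bv1 (h2 v)))"
      using vdP1[OF u] vdQ1[OF v] vdm[OF v] C1(16) C2(16) u v xy unfolding u_def v_def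
      by (simp_all add: scaleR_add_right scaleR_diff_right)
    have "pd2 (pd2 G2) (x, y) = vd P1 (x + y) + vd Q1 (y - x)"
      by (rule pd_rot[OF oD2, where P=P1 and Q=Q1], use q xy G2d P1d Q1d u v u_def v_def in auto)
    then have b22: "pd2 (pd2 G2) q = (1/2) *\<^sub>R ((vd c1 u *\<^sub>R av (h1 u) + (-e1/2) *\<^sub>R av1 (h1 u)) + (vd c2 v *\<^sub>R bv (h2 v) + (-e2/2) *\<^sub>R bv1 (h2 v)))"
      using vdP1[OF u] vdQ1[OF v] C1(16) C2(16) u v xy unfolding u_def v_def
      by (simp add: scaleR_add_right)
    show ?thesis using ROT_calc[OF b1 b2 b11 b12 b22] by blast
  qed
  have iso: "lorentz_isothermal G2 D2"
    unfolding lorentz_isothermal_def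
    by (rule exI[of _ "\<lambda>q. lor (pd2 G2 q) (pd2 G2 q)"]) (use rot in auto)
  have F33: "e1 = e2 \<longrightarrow> conformal_asymptotic G2 D2"
    unfolding conformal_asymptotic_def using iso rot by auto
  have F34: "e1 \<noteq> e2 \<longrightarrow> conformal_curvature_line G2 D2"
  proof
    assume "e1 \<noteq> e2"
    then have "e1 = - e2" using e1v e2v by auto
    then show "conformal_curvature_line G2 D2" unfolding conformal_curvature_line_def using iso rot by auto
  qed
  have F13: "smooth1_on h1 I" unfolding smooth1_iff using C1(9) .
  have F15: "smooth1_on h2 J" unfolding smooth1_iff using C2(9) .
  have F17: "e1 \<in> {1, -1}" using e1v by auto
  have F18: "e2 \<in> {1, -1}" using e2v by auto
  have F20: "\<forall>u\<in>I. (\<phi> has_vector_derivative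
        (- e1 / (2 * vd h1 u)) *\<^sub>R vector [-1 - (h1 u)^2, 1 - (h1 u)^2, 2 * h1 u]) (at u)"
    using C1(13) unfolding av_def .
  have F22: "\<forall>v\<in>J. (\<psi> has_vector_derivative
        (- e2 / (2 * vd h2 v)) *\<^sub>R vector [1 + (h2 v)^2, 1 - (h2 v)^2, -2 * h2 v]) (at v)"
    using C2(13) unfolding bv_def .
  have F33': "e1 = e2 \<longrightarrow>
        conformal_asymptotic (\<lambda>(x, y). f (\<Phi> (x + y, y - x))) {(x, y). (x + y, y - x) \<in> I \<times> J}"
    using F33 unfolding G2_def D2_def .
  have F34': "e1 \<noteq> e2 \<longrightarrow>
        conformal_curvature_line (\<lambda>(x, y). f (\<Phi> (x + y, y - x))) {(x, y). (x + y, y - x) \<in> I \<times> J}"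
    using F34 unfolding G2_def D2_def .
  show ?thesis
    apply (rule exI[where x=\<Phi>], rule exI[where x=I], rule exI[where x=J], rule exI[where x=h1],
        rule exI[where x=h2], rule exI[where x=\<phi>], rule exI[where x=\<psi>], rule exI[where x=e1],
        rule exI[where x=e2], rule exI[where x=u0], rule exI[where x=v0])
    apply (intro conjI)
    by (fact C1(1) C1(2) C2(1) C2(2) C1(3) C2(3) F7 F8 F9 F10 F11 F12 F13 C1(10) F15 C2(10) F17 F18
        C1(12) F20 C2(12) F22 F23 C1(17) C1(18) C1(19) C1(20) C2(17) C2(18) C2(19) C2(20) F32 F33' F34')+
qed

end
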